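(* Under the joint threshold-based policy with thresholds $P_S,P_D$, when $D$ knows that $S$ uses this policy with threshold $P_S$, $$\Psi(P_S,P_D)=\min\Big(1,\frac{\lambda_S}{[1-p(P_{tx})]P_S},\frac{\lambda_D}{[1-p(P_{tx})]P_D}\Big),\qquad P_{tx}=\frac{P_S-P_{C,S}}{1+\alpha}.$$
   Context: Time slotted, $t=1,2,\dots$ (energy and power identified). $S$ and $D$ harvest $E_S^t,E_D^t\ge0$; $\{E_S^t\},\{E_D^t\}$ stationary ergodic with means $\lambda_S,\lambda_D>0$. Infinite batteries, $B_\beta^1=0$. Block Rayleigh fading, $|h_t|^2$ i.i.d. exponential of mean 1, independent of energy arrivals; $D$ knows $h_t$. Rate $R>0$, noise $z>0$, $\alpha>0$, circuit power $P_{C,S}\ge0$, $P_S>P_{C,S}$; outage probability $p(P_{tx})=1-\exp(-(2^R-1)z/P_{tx})$. Joint threshold-based policy with full battery-state and policy information shared: in slot $t$, if $B_S^t\ge P_S$, $B_D^t\ge P_D$ and the channel is not in outage (i.e. $|h_t|^2\ge(2^R-1)z/P_{tx}$), $S$ consumes $P_S$ and $D$ consumes $P_D$; otherwise both consume $0$. $\Psi(P_S,P_D)=\lim_{n\to\infty}\frac1n\sum_{t=1}^n\mathbf{E}[\mathbf{1}_{B_S^t\ge P_S,\,B_D^t\ge P_D}]$. *)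

theory Defs
  imports "HOL-Probability.Probability"
begin

abbreviation path_space :: "(nat \<Rightarrow> real) measure" where
  "path_space \<equiv> Pi\<^sub>M UNIV (\<lambda>_. borel)"

definition stationary_process :: "'a measure \<Rightarrow> (nat \<Rightarrow> 'a \<Rightarrow> real) \<Rightarrow> bool" where
  "stationary_process M X \<longleftrightarrow>
     (\<forall>t. X t \<in> borel_measurable M) \<and>
     (\<forall>k. distr M path_space (\<lambda>\<omega> t. X (t + k) \<omega>) = distr M path_space (\<lambda>\<omega> t. X t \<omega>))"

definition ergodic_process :: "'a measure \<Rightarrow> (nat \<Rightarrow> 'a \<Rightarrow> real) \<Rightarrow> bool" where
  "ergodic_process M X \<longleftrightarrow>
     (\<forall>A \<in> sets path_space. (\<forall>x. x \<in> A \<longleftrightarrow> (\<lambda>t. x (Suc t)) \<in> A) \<longrightarrow>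
        measure M {\<omega> \<in> space M. (\<lambda>t. X t \<omega>) \<in> A} \<in> {0, 1})"

definition stationary_ergodic :: "'a measure \<Rightarrow> (nat \<Rightarrow> 'a \<Rightarrow> real) \<Rightarrow> bool" where
  "stationary_ergodic M X \<longleftrightarrow> stationary_process M X \<and> ergodic_process M X"

definition outage_prob :: "real \<Rightarrow> real \<Rightarrow> real \<Rightarrow> real" where
  "outage_prob R z Ptx = 1 - exp (- ((2 powr R - 1) * z / Ptx))"

definition tx_power :: "real \<Rightarrow> real \<Rightarrow> real \<Rightarrow> real" where
  "tx_power PS PCS \<alpha> = (PS - PCS) / (1 + \<alpha>)"

text \<open>Battery states (B_S^{t+1}, B_D^{t+1}) under the joint threshold policy; index t = 0 here
  corresponds to slot 1 of the paper. ES, ED are harvested energies, g t = |h_t|^2,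
  thr is the non-outage threshold (2^R-1) z / P_tx.\<close>
fun batteries :: "real \<Rightarrow> real \<Rightarrow> real \<Rightarrow> (nat \<Rightarrow> real) \<Rightarrow> (nat \<Rightarrow> real) \<Rightarrow> (nat \<Rightarrow> real)
                   \<Rightarrow> nat \<Rightarrow> real \<times> real" where
  "batteries PS PD thr ES ED g 0 = (0, 0)"
| "batteries PS PD thr ES ED g (Suc t) =
     (let (bs, bd) = batteries PS PD thr ES ED g t;
          act = (bs \<ge> PS \<and> bd \<ge> PD \<and> g t \<ge> thr)
      in (bs + ES t - (if act then PS else 0), bd + ED t - (if act then PD else 0)))"

end

theory Submission
  imports Defs
begin


lemma bat_formula:
  "fst (batteries PS PD thr es ed gg n) = (\<Sum>t<n. es t) - PS * (\<Sum>t<n. if fst (batteries PS PD thr es ed gg t) \<ge> PS \<and> snd (batteries PS PD thr es ed gg t) \<ge> PD \<and> gg t \<ge> thr then 1 else 0)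
 \<and> snd (batteries PS PD thr es ed gg n) = (\<Sum>t<n. ed t) - PD * (\<Sum>t<n. if fst (batteries PS PD thr es ed gg t) \<ge> PS \<and> snd (batteries PS PD thr es ed gg t) \<ge> PD \<and> gg t \<ge> thr then 1 else 0)"
proof (induction n)
  case 0 then show ?case by simp
next
  case (Suc n)
  show ?case using Suc by (simp add: split_beta Let_def algebra_simps)
qed

lemma bat_nonneg:
  assumes "\<And>t. es t \<ge> 0" "PS \<ge> 0"
  shows "fst (batteries PS PD thr es ed gg n) \<ge> 0"
proof (induction n)
  case 0 then show ?case by simp
next
  case (Suc n)
  show ?case using Suc assms(1)[of n] assms(2) by (auto simp add: split_beta Let_def)
qed

lemma bat_nonneg2:
  assumes "\<And>t. ed t \<ge> 0" "PD \<ge> 0"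
  shows "snd (batteries PS PD thr es ed gg n) \<ge> 0"
proof (induction n)
  case 0 then show ?case by simp
next
  case (Suc n)
  show ?case using Suc assms(1)[of n] assms(2) by (auto simp add: split_beta Let_def)
qed


lemma ind_sum_step:
  fixes A :: "nat \<Rightarrow> bool"
  assumes "m \<le> n" "\<And>t. m \<le> t \<Longrightarrow> t < n \<Longrightarrow> A t"
  shows "(\<Sum>t<n. if A t then 1 else 0::real) \<ge> (\<Sum>t<m. if A t then 1 else 0) + (real n - real m)"
  using assms
proof (induction n rule: dec_induct)
  case base then show ?case by simp
next
  case (step k)
  then show ?case by simp
qed

lemma ind_sum_le:
  fixes A :: "nat \<Rightarrow> bool"
  shows "(\<Sum>t<n. if A t then 1 else 0::real) \<le> real n"
proof -
  have "(\<Sum>t<n. if A t then 1 else 0::real) \<le> (\<Sum>t<n. 1)" by (intro sum_mono) auto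
  then show ?thesis by simp
qed

lemma ind_sum_mono:
  fixes A :: "nat \<Rightarrow> bool"
  assumes "m \<le> n"
  shows "(\<Sum>t<m. if A t then 1 else 0::real) \<le> (\<Sum>t<n. if A t then 1 else 0::real)"
  using assms by (intro sum_mono2) auto

lemma det_limit:
  fixes es ed bs bd N K :: "nat \<Rightarrow> real" and A G :: "nat \<Rightarrow> bool"
    and PS PD q lS lD :: real
  assumes Ndef: "\<And>n. N n = (\<Sum>t<n. if A t \<and> G t then 1 else 0)"
    and Kdef: "\<And>n. K n = (\<Sum>t<n. if A t then 1 else 0)"
    and bs: "\<And>n. bs n = (\<Sum>t<n. es t) - PS * N n"
    and bd: "\<And>n. bd n = (\<Sum>t<n. ed t) - PD * N n"
    and A: "\<And>t. A t \<longleftrightarrow> bs t \<ge> PS \<and> bd t \<ge> PD"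
    and bs0: "\<And>n. bs n \<ge> 0" and bd0: "\<And>n. bd n \<ge> 0"
    and pos: "PS > 0" "PD > 0" "q > 0"
    and hES: "\<And>\<delta>. \<delta> > 0 \<Longrightarrow> \<exists>n0. \<forall>n\<ge>n0. \<bar>(\<Sum>t<n. es t) - real n * lS\<bar> \<le> \<delta> * real n"
    and hED: "\<And>\<delta>. \<delta> > 0 \<Longrightarrow> \<exists>n0. \<forall>n\<ge>n0. \<bar>(\<Sum>t<n. ed t) - real n * lD\<bar> \<le> \<delta> * real n"
    and hM: "\<And>\<delta>. \<delta> > 0 \<Longrightarrow> \<exists>n0. \<forall>n\<ge>n0. \<bar>N n - q * K n\<bar> \<le> \<delta> * real n"
  shows "(\<lambda>n. K n / real n) \<longlonglongrightarrow> min 1 (min (lS / (q * PS)) (lD / (q * PD)))"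
proof (rule LIMSEQ_I)
  define c where "c = min 1 (min (lS / (q * PS)) (lD / (q * PD)))"
  fix r :: real assume "r > 0"
  define \<epsilon> where "\<epsilon> = r / 2"
  have \<epsilon>: "\<epsilon> > 0" using \<open>r>0\<close> by (simp add: \<epsilon>_def)
  define X where "X = 1 / PS + 1 / PD + 1"
  define \<delta> where "\<delta> = \<epsilon> * q / (2 * X)"
  have den: "X > 0" using pos unfolding X_def by (simp add: add_pos_pos)
  have \<delta>: "\<delta> > 0" using \<epsilon> pos den unfolding \<delta>_def by (intro divide_pos_pos mult_pos_pos) auto
  have dS: "\<delta> / (q * PS) + \<delta> / q \<le> \<epsilon> / 2"
  proof -
    have "\<delta> / (q * PS) + \<delta> / q = \<delta> * (1/PS + 1) / q" using pos by (simp add: field_simps)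
    also have "\<dots> \<le> \<delta> * X / q"
      using pos \<delta> unfolding X_def by (intro divide_right_mono mult_left_mono) auto
    also have "\<dots> = \<epsilon> / 2" unfolding \<delta>_def using pos den by (simp add: field_simps)
    finally show ?thesis .
  qed
  have dD: "\<delta> / (q * PD) + \<delta> / q \<le> \<epsilon> / 2"
  proof -
    have "\<delta> / (q * PD) + \<delta> / q = \<delta> * (1/PD + 1) / q" using pos by (simp add: field_simps)
    also have "\<dots> \<le> \<delta> * X / q"
      using pos \<delta> unfolding X_def by (intro divide_right_mono mult_left_mono) auto
    also have "\<dots> = \<epsilon> / 2" unfolding \<delta>_def using pos den by (simp add: field_simps)
    finally show ?thesis .
  qed
  obtain n1 where n1: "\<And>n. n \<ge> n1 \<Longrightarrow> \<bar>(\<Sum>t<n. es t) - real n * lS\<bar> \<le> \<delta> * real n" using hES[OF \<delta>] by blast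
  obtain n2 where n2: "\<And>n. n \<ge> n2 \<Longrightarrow> \<bar>(\<Sum>t<n. ed t) - real n * lD\<bar> \<le> \<delta> * real n" using hED[OF \<delta>] by blast
  obtain n3 where n3: "\<And>n. n \<ge> n3 \<Longrightarrow> \<bar>N n - q * K n\<bar> \<le> \<delta> * real n" using hM[OF \<delta>] by blast
  define n0 where "n0 = max n1 (max n2 n3)"
  have h0: "\<bar>(\<Sum>t<n. es t) - real n * lS\<bar> \<le> \<delta> * real n \<and> \<bar>(\<Sum>t<n. ed t) - real n * lD\<bar> \<le> \<delta> * real n
     \<and> \<bar>N n - q * K n\<bar> \<le> \<delta> * real n" if "n \<ge> n0" for n
    using n1 n2 n3 that unfolding n0_def by auto
  have c1: "c \<le> 1" and cS: "c \<le> lS / (q * PS)" and cD: "c \<le> lD / (q * PD)" unfolding c_def by auto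
  have upper: "K n \<le> real n * (c + \<epsilon> / 2)" if "n \<ge> n0" for n
  proof -
    note h = h0[OF that]
    have K_le: "K n \<le> real n" unfolding Kdef by (rule ind_sum_le)
    have qK: "q * K n \<le> N n + \<delta> * real n" using h by linarith
    have US: "K n \<le> real n * (lS / (q * PS) + \<epsilon> / 2)"
    proof -
      have "PS * N n \<le> (\<Sum>t<n. es t)" using bs0[of n] bs[of n] by simp
      also have "\<dots> \<le> real n * lS + \<delta> * real n" using h by linarith
      finally have "PS * N n \<le> real n * lS + \<delta> * real n" .
      then have "N n \<le> (real n * lS + \<delta> * real n) / PS" using pos by (simp add: field_simps)
      with qK have "q * K n \<le> (real n * lS + \<delta> * real n) / PS + \<delta> * real n" by linarith
      then have "K n \<le> ((real n * lS + \<delta> * real n) / PS + \<delta> * real n) / q" using pos by (simp add: field_simps)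
      also have "\<dots> = real n * (lS / (q * PS) + (\<delta> / (q * PS) + \<delta> / q))" using pos by (simp add: field_simps)
      also have "\<dots> \<le> real n * (lS / (q * PS) + \<epsilon> / 2)"
        by (intro mult_left_mono add_left_mono dS) simp
      finally show ?thesis .
    qed
    have UD: "K n \<le> real n * (lD / (q * PD) + \<epsilon> / 2)"
    proof -
      have "PD * N n \<le> (\<Sum>t<n. ed t)" using bd0[of n] bd[of n] by simp
      also have "\<dots> \<le> real n * lD + \<delta> * real n" using h by linarith
      finally have "PD * N n \<le> real n * lD + \<delta> * real n" .
      then have "N n \<le> (real n * lD + \<delta> * real n) / PD" using pos by (simp add: field_simps)
      with qK have "q * K n \<le> (real n * lD + \<delta> * real n) / PD + \<delta> * real n" by linarith
      then have "K n \<le> ((real n * lD + \<delta> * real n) / PD + \<delta> * real n) / q" using pos by (simp add: field_simps)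
      also have "\<dots> = real n * (lD / (q * PD) + (\<delta> / (q * PD) + \<delta> / q))" using pos by (simp add: field_simps)
      also have "\<dots> \<le> real n * (lD / (q * PD) + \<epsilon> / 2)"
        by (intro mult_left_mono add_left_mono dD) simp
      finally show ?thesis .
    qed
    have "\<epsilon> * real n / 2 \<ge> 0" using \<epsilon> by simp
    then have U1: "K n \<le> real n * (1 + \<epsilon> / 2)" using K_le by (simp add: algebra_simps)
    have "c = 1 \<or> c = lS / (q * PS) \<or> c = lD / (q * PD)" unfolding c_def by (auto simp: min_def)
    then show ?thesis using U1 US UD by auto
  qed
  have Kmono: "K m \<le> K n" if "m \<le> n" for m n unfolding Kdef using that by (rule ind_sum_mono)
  have cl: "c - \<epsilon> / 2 \<le> 1" using c1 \<epsilon> by simp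
  have lower: "K n \<ge> real n * (c - \<epsilon> / 2) - 1 / q - 1 - real n0" if "n \<ge> n0" for n
  proof (cases "\<forall>t. n0 \<le> t \<and> t < n \<longrightarrow> A t")
    case True
    have "K n \<ge> K n0 + (real n - real n0)" unfolding Kdef using that True by (intro ind_sum_step) auto
    moreover have "K n0 \<ge> 0" unfolding Kdef by (intro sum_nonneg) auto
    moreover have "real n * (c - \<epsilon> / 2) \<le> real n" using cl by (simp add: mult_left_le)
    moreover have "1 / q > 0" using pos by simp
    ultimately show ?thesis by linarith
  next
    case False
    define S where "S = {t. n0 \<le> t \<and> t < n \<and> \<not> A t}"
    have finS: "finite S" unfolding S_def by (rule finite_subset[of _ "{..<n}"]) auto
    have neS: "S \<noteq> {}" using False unfolding S_def by auto
    define \<tau> where "\<tau> = Max S"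
    have \<tau>S: "\<tau> \<in> S" unfolding \<tau>_def using finS neS by (rule Max_in)
    have \<tau>max: "\<And>t. t \<in> S \<Longrightarrow> t \<le> \<tau>" unfolding \<tau>_def using finS by simp
    have \<tau>1: "n0 \<le> \<tau>" "\<tau> < n" "\<not> A \<tau>" using \<tau>S unfolding S_def by auto
    have after: "A t" if "Suc \<tau> \<le> t" "t < n" for t
    proof (rule ccontr)
      assume "\<not> A t"
      then have "t \<in> S" using that \<tau>1 unfolding S_def by auto
      then show False using \<tau>max that by fastforce
    qed
    have Kn: "K n \<ge> K \<tau> + (real n - real \<tau> - 1)"
    proof -
      have "K n \<ge> K (Suc \<tau>) + (real n - real (Suc \<tau>))" unfolding Kdef
        using \<tau>1 after by (intro ind_sum_step) auto
      moreover have "K (Suc \<tau>) \<ge> K \<tau>" by (rule Kmono) simp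
      ultimately show ?thesis by simp
    qed
    note h = h0[OF \<tau>1(1)]
    have NK: "N \<tau> \<le> q * K \<tau> + \<delta> * real \<tau>" using h by linarith
    have Kt: "K \<tau> \<ge> real \<tau> * (c - \<epsilon> / 2) - 1 / q"
    proof (cases "bs \<tau> < PS")
      case True
      then have "(\<Sum>t<\<tau>. es t) < PS + PS * N \<tau>" using bs[of \<tau>] by simp
      moreover have "(\<Sum>t<\<tau>. es t) \<ge> real \<tau> * lS - \<delta> * real \<tau>" using h by linarith
      ultimately have "real \<tau> * lS - \<delta> * real \<tau> < PS + PS * (q * K \<tau> + \<delta> * real \<tau>)"
        using NK pos by (smt (verit) mult_left_mono)
      then have "(real \<tau> * lS - \<delta> * real \<tau> - PS - PS * \<delta> * real \<tau>) / (PS * q) < K \<tau>"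
        using pos by (simp add: field_simps)
      moreover have "(real \<tau> * lS - \<delta> * real \<tau> - PS - PS * \<delta> * real \<tau>) / (PS * q)
          = real \<tau> * (lS / (q * PS) - (\<delta> / (q * PS) + \<delta> / q)) - 1 / q"
        using pos by (simp add: field_simps)
      moreover have "real \<tau> * (lS / (q * PS) - (\<delta> / (q * PS) + \<delta> / q)) \<ge> real \<tau> * (c - \<epsilon> / 2)"
        using dS cS by (intro mult_left_mono) auto
      ultimately show ?thesis by linarith
    next
      case False
      then have "bd \<tau> < PD" using \<tau>1(3) A[of \<tau>] by auto
      then have "(\<Sum>t<\<tau>. ed t) < PD + PD * N \<tau>" using bd[of \<tau>] by simp
      moreover have "(\<Sum>t<\<tau>. ed t) \<ge> real \<tau> * lD - \<delta> * real \<tau>" using h by linarith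
      ultimately have "real \<tau> * lD - \<delta> * real \<tau> < PD + PD * (q * K \<tau> + \<delta> * real \<tau>)"
        using NK pos by (smt (verit) mult_left_mono)
      then have "(real \<tau> * lD - \<delta> * real \<tau> - PD - PD * \<delta> * real \<tau>) / (PD * q) < K \<tau>"
        using pos by (simp add: field_simps)
      moreover have "(real \<tau> * lD - \<delta> * real \<tau> - PD - PD * \<delta> * real \<tau>) / (PD * q)
          = real \<tau> * (lD / (q * PD) - (\<delta> / (q * PD) + \<delta> / q)) - 1 / q"
        using pos by (simp add: field_simps)
      moreover have "real \<tau> * (lD / (q * PD) - (\<delta> / (q * PD) + \<delta> / q)) \<ge> real \<tau> * (c - \<epsilon> / 2)"
        using dD cD by (intro mult_left_mono) auto
      ultimately show ?thesis by linarith
    qed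
    have "real n * (c - \<epsilon> / 2) - real \<tau> * (c - \<epsilon> / 2) \<le> real n - real \<tau>"
    proof -
      have "real n * (c - \<epsilon> / 2) - real \<tau> * (c - \<epsilon> / 2) = (real n - real \<tau>) * (c - \<epsilon> / 2)"
        by (rule left_diff_distrib[symmetric])
      also have "\<dots> \<le> (real n - real \<tau>) * 1" using cl \<tau>1 by (intro mult_left_mono) auto
      finally show ?thesis by simp
    qed
    then show ?thesis using Kn Kt by linarith
  qed
  obtain m where m: "real m \<ge> (1 / q + 1 + real n0) / (\<epsilon> / 2)" using real_arch_simple by blast
  show "\<exists>no. \<forall>n\<ge>no. norm (K n / real n - min 1 (min (lS / (q * PS)) (lD / (q * PD)))) < r"
  proof (intro exI allI impI)
    fix n assume nn: "n \<ge> max (max n0 m) 1"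
    then have nn0: "n \<ge> n0" and nm: "n \<ge> m" and npos: "real n > 0" by auto
    have "(1 / q + 1 + real n0) \<le> real n * (\<epsilon> / 2)"
    proof -
      have "real m \<le> real n" using nm by simp
      with m have "(1 / q + 1 + real n0) / (\<epsilon> / 2) \<le> real n" by linarith
      then show ?thesis using \<epsilon> by (simp add: pos_divide_le_eq)
    qed
    with lower[OF nn0] have L: "K n \<ge> real n * (c - \<epsilon>)" by (simp add: right_diff_distrib)
    have U: "K n \<le> real n * (c + \<epsilon> / 2)" by (rule upper[OF nn0])
    have "K n / real n \<ge> c - \<epsilon>" using L npos by (simp add: field_simps)
    moreover have "K n / real n \<le> c + \<epsilon> / 2" using U npos by (simp add: field_simps)
    ultimately have "\<bar>K n / real n - c\<bar> \<le> \<epsilon>" using \<epsilon> by linarith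
    then show "norm (K n / real n - min 1 (min (lS / (q * PS)) (lD / (q * PD)))) < r"
      unfolding c_def[symmetric] using \<open>r > 0\<close> \<epsilon>_def by simp
  qed
qed


definition shiftp :: "(nat \<Rightarrow> real) \<Rightarrow> (nat \<Rightarrow> real)" where "shiftp x = (\<lambda>t. x (Suc t))"
definition shiftk :: "nat \<Rightarrow> (nat \<Rightarrow> real) \<Rightarrow> (nat \<Rightarrow> real)" where "shiftk k x = (\<lambda>t. x (t + k))"

lemma space_path: "space path_space = UNIV" by (simp add: space_PiM)

lemma measurable_shiftp[measurable]: "shiftp \<in> measurable path_space path_space"
  unfolding shiftp_def by (rule measurable_PiM_single') (auto simp: space_PiM)

lemma measurable_shiftk[measurable]: "shiftk k \<in> measurable path_space path_space"
  unfolding shiftk_def by (rule measurable_PiM_single') (auto simp: space_PiM)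

lemma shiftk_Suc: "shiftk (Suc k) = shiftk k \<circ> shiftp"
  by (auto simp: shiftk_def shiftp_def fun_eq_iff)

lemma shiftk_Suc': "shiftk (Suc k) x = shiftk k (shiftp x)"
  by (auto simp: shiftk_def shiftp_def fun_eq_iff)

lemma shiftk_0[simp]: "shiftk 0 x = x" by (simp add: shiftk_def)

lemma shiftk_app: "shiftk k x t = x (t + k)" by (simp add: shiftk_def)

lemma distr_shiftk:
  assumes sP: "sets P = sets path_space" and inv: "distr P path_space shiftp = P"
  shows "distr P path_space (shiftk k) = P"
proof (induction k)
  case 0
  have "distr P path_space (shiftk 0) = distr P P (\<lambda>x. x)"
    by (intro distr_cong) (auto simp: sP)
  then show ?case by (simp del: shiftk_0)
next
  case (Suc k)
  have ms: "shiftp \<in> measurable P path_space" using measurable_shiftp by (simp add: measurable_cong_sets[OF sP refl])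
  have mk: "shiftk k \<in> measurable path_space path_space" by simp
  have "distr P path_space (shiftk (Suc k)) = distr P path_space (shiftk k \<circ> shiftp)"
    by (simp add: shiftk_Suc)
  also have "\<dots> = distr (distr P path_space shiftp) path_space (shiftk k)"
    by (rule distr_distr[OF mk ms, symmetric])
  also have "\<dots> = P" using inv Suc by simp
  finally show ?case .
qed

fun Mx :: "((nat \<Rightarrow> real) \<Rightarrow> real) \<Rightarrow> nat \<Rightarrow> (nat \<Rightarrow> real) \<Rightarrow> real" where
  "Mx h 0 x = 0"
| "Mx h (Suc n) x = max (Mx h n x) (\<Sum>k<Suc n. h (shiftk k x))"

lemma S_Suc: "(\<Sum>k<Suc n. h (shiftk k x)) = h x + (\<Sum>k<n. h (shiftk k (shiftp x)))"
  by (subst sum.lessThan_Suc_shift) (simp add: shiftk_Suc' del: sum.lessThan_Suc)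

lemma Mx_nonneg: "Mx h n x \<ge> 0"
  by (induction n) auto

lemma Mx_ge: "k \<le> n \<Longrightarrow> (\<Sum>j<k. h (shiftk j x)) \<le> Mx h n x"
proof (induction n)
  case 0 then show ?case by simp
next
  case (Suc n)
  then show ?case
    by (cases "k = Suc n") (auto simp del: sum.lessThan_Suc)
qed

lemma Mx_key: "Mx h n x \<le> max 0 (h x + Mx h n (shiftp x))"
proof (induction n)
  case 0 then show ?case by simp
next
  case (Suc n)
  have m1: "Mx h n (shiftp x) \<le> Mx h (Suc n) (shiftp x)" by simp
  have m2: "(\<Sum>k<n. h (shiftk k (shiftp x))) \<le> Mx h (Suc n) (shiftp x)" by (rule Mx_ge) simp
  have "Mx h n x \<le> max 0 (h x + Mx h (Suc n) (shiftp x))" using Suc m1 by linarith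
  moreover have "(\<Sum>k<Suc n. h (shiftk k x)) \<le> max 0 (h x + Mx h (Suc n) (shiftp x))"
    using m2 unfolding S_Suc by linarith
  ultimately show ?case by (simp del: sum.lessThan_Suc)
qed

lemma Mx_pos_iff: "Mx h n x > 0 \<longleftrightarrow> (\<exists>k\<le>n. (\<Sum>j<k. h (shiftk j x)) > 0)"
proof (induction n)
  case 0 then show ?case by simp
next
  case (Suc n)
  show ?case unfolding Mx.simps(2) less_max_iff_disj Suc
    by (auto simp del: sum.lessThan_Suc simp: le_Suc_eq)
qed

lemma Mx_bound: "Mx h n x \<le> (\<Sum>j<n. \<bar>h (shiftk j x)\<bar>)"
proof (induction n)
  case 0 then show ?case by simp
next
  case (Suc n)
  have "(\<Sum>k<Suc n. h (shiftk k x)) \<le> (\<Sum>j<Suc n. \<bar>h (shiftk j x)\<bar>)" by (intro sum_mono) simp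
  moreover have "(\<Sum>j<n. \<bar>h (shiftk j x)\<bar>) \<le> (\<Sum>j<Suc n. \<bar>h (shiftk j x)\<bar>)" by simp
  ultimately show ?case using Suc by (simp del: sum.lessThan_Suc)
qed

lemma Mx_measurable[measurable]:
  assumes [measurable]: "h \<in> borel_measurable path_space"
  shows "Mx h n \<in> borel_measurable path_space"
  by (induction n) simp_all

lemma maximal_ergodic:
  fixes h :: "(nat \<Rightarrow> real) \<Rightarrow> real"
  assumes sP: "sets P = sets path_space" and fm: "finite_measure P"
    and inv: "distr P path_space shiftp = P"
    and hint: "integrable P h"
  shows "integral\<^sup>L P (\<lambda>x. if (\<exists>n. (\<Sum>k<n. h (shiftk k x)) > 0) then h x else 0) \<ge> 0"
proof -
  have meq: "measurable P = measurable path_space" by (intro ext measurable_cong_sets) (auto simp: sP)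
  have hm[measurable]: "h \<in> borel_measurable path_space"
    using borel_measurable_integrable[OF hint] by (simp add: meq)
  have intk: "integrable P (\<lambda>x. h (shiftk k x))" for k
  proof -
    have "integrable (distr P path_space (shiftk k)) h" using distr_shiftk[OF sP inv] hint by simp
    then show ?thesis using integrable_distr_eq[of "shiftk k" P path_space h] by (simp add: meq)
  qed
  have intMx[simp]: "integrable P (Mx h n)" for n
  proof (rule Bochner_Integration.integrable_bound)
    show "integrable P (\<lambda>x. \<Sum>j<n. \<bar>h (shiftk j x)\<bar>)" using intk by auto
    show "Mx h n \<in> borel_measurable P" by (simp add: meq)
    show "AE x in P. norm (Mx h n x) \<le> norm (\<Sum>j<n. \<bar>h (shiftk j x)\<bar>)"
      using Mx_bound[of h n] Mx_nonneg[of h n] by (auto intro!: AE_I2 simp: sum_nonneg)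
  qed
  have intMxs[simp]: "integrable P (\<lambda>x. Mx h n (shiftp x))" for n
  proof -
    have "integrable (distr P path_space shiftp) (Mx h n)" using inv by simp
    then show ?thesis using integrable_distr_eq[of shiftp P path_space "Mx h n"] by (simp add: meq)
  qed
  have eqint: "integral\<^sup>L P (\<lambda>x. Mx h n (shiftp x)) = integral\<^sup>L P (Mx h n)" for n
  proof -
    have "integral\<^sup>L P (\<lambda>x. Mx h n (shiftp x)) = integral\<^sup>L (distr P path_space shiftp) (Mx h n)"
      by (rule integral_distr[symmetric]) (auto simp: meq)
    then show ?thesis using inv by simp
  qed
  have step: "integral\<^sup>L P (\<lambda>x. if Mx h n x > 0 then h x else 0) \<ge> 0" for n
  proof -
    have "integral\<^sup>L P (\<lambda>x. Mx h n x - Mx h n (shiftp x)) \<le> integral\<^sup>L P (\<lambda>x. if Mx h n x > 0 then h x else 0)"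
    proof (rule integral_mono)
      show "integrable P (\<lambda>x. Mx h n x - Mx h n (shiftp x))" by simp
      show "integrable P (\<lambda>x. if Mx h n x > 0 then h x else 0)"
        by (rule Bochner_Integration.integrable_bound[OF hint]) (auto simp: meq intro!: AE_I2)
      fix x assume "x \<in> space P"
      show "Mx h n x - Mx h n (shiftp x) \<le> (if Mx h n x > 0 then h x else 0)"
        using Mx_key[of h n x] Mx_nonneg[of h n x] Mx_nonneg[of h n "shiftp x"] by auto
    qed
    moreover have "integral\<^sup>L P (\<lambda>x. Mx h n x - Mx h n (shiftp x)) = 0"
      by (subst Bochner_Integration.integral_diff) (auto simp: eqint)
    ultimately show ?thesis by simp
  qed
  have lim: "(\<lambda>n. integral\<^sup>L P (\<lambda>x. if Mx h n x > 0 then h x else 0)) \<longlonglongrightarrow>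
     integral\<^sup>L P (\<lambda>x. if (\<exists>n. (\<Sum>k<n. h (shiftk k x)) > 0) then h x else 0)"
  proof (rule integral_dominated_convergence[where w="\<lambda>x. norm (h x)"])
    show "(\<lambda>x. if (\<exists>n. (\<Sum>k<n. h (shiftk k x)) > 0) then h x else 0) \<in> borel_measurable P"
      by (simp add: meq)
    show "\<And>n. (\<lambda>x. if Mx h n x > 0 then h x else 0) \<in> borel_measurable P" by (simp add: meq)
    show "integrable P (\<lambda>x. norm (h x))" using hint by simp
    show "AE x in P. (\<lambda>n. if Mx h n x > 0 then h x else 0) \<longlonglongrightarrow> (if (\<exists>n. (\<Sum>k<n. h (shiftk k x)) > 0) then h x else 0)"
    proof (rule AE_I2)
      fix x
      show "(\<lambda>n. if Mx h n x > 0 then h x else 0) \<longlonglongrightarrow> (if (\<exists>n. (\<Sum>k<n. h (shiftk k x)) > 0) then h x else 0)"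
      proof (cases "\<exists>n. (\<Sum>k<n. h (shiftk k x)) > 0")
        case True
        then obtain m where m: "(\<Sum>k<m. h (shiftk k x)) > 0" by blast
        have "\<forall>n\<ge>m. Mx h n x > 0" using m by (auto simp: Mx_pos_iff)
        then have "eventually (\<lambda>n. (if Mx h n x > 0 then h x else 0) = h x) sequentially"
          unfolding eventually_sequentially by auto
        then show ?thesis using True by (simp add: tendsto_eventually)
      next
        case False
        then have "\<And>n. \<not> Mx h n x > 0" by (auto simp: Mx_pos_iff)
        then show ?thesis using False by simp
      qed
    qed
    show "\<And>n. AE x in P. norm (if Mx h n x > 0 then h x else 0) \<le> norm (h x)"
      by (auto intro!: AE_I2)
  qed
  show ?thesis using step by (intro LIMSEQ_le_const[OF lim]) auto
qed

definition Bset :: "real \<Rightarrow> real \<Rightarrow> (nat \<Rightarrow> real) set" where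
  "Bset \<sigma> a = {x. \<exists>b::rat. real_of_rat b < a \<and> (\<forall>N::nat. \<exists>n\<ge>N. (\<Sum>k<n. \<sigma> * x k) \<le> real n * real_of_rat b)}"

lemma Bset_sets: "Bset \<sigma> a \<in> sets path_space"
proof -
  have "{x\<in>space path_space. \<exists>b::rat. real_of_rat b < a \<and> (\<forall>N::nat. \<exists>n\<ge>N. (\<Sum>k<n. \<sigma> * x k) \<le> real n * real_of_rat b)} \<in> sets path_space"
    by measurable
  then show ?thesis unfolding Bset_def space_path by simp
qed

lemma Bset_inv: "x \<in> Bset \<sigma> a \<longleftrightarrow> shiftp x \<in> Bset \<sigma> a"
proof
  assume "x \<in> Bset \<sigma> a"
  then obtain b :: rat where b: "real_of_rat b < a" and H: "\<forall>N::nat. \<exists>n\<ge>N. (\<Sum>k<n. \<sigma> * x k) \<le> real n * real_of_rat b"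
    unfolding Bset_def by blast
  obtain b' :: rat where b': "real_of_rat b < real_of_rat b'" "real_of_rat b' < a" using of_rat_dense[OF b] by blast
  have "\<forall>N::nat. \<exists>n\<ge>N. (\<Sum>k<n. \<sigma> * shiftp x k) \<le> real n * real_of_rat b'"
  proof
    fix N :: nat
    obtain M :: nat where M: "real M \<ge> (real_of_rat b - \<sigma> * x 0) / (real_of_rat b' - real_of_rat b)"
      using real_arch_simple by blast
    obtain m where m: "m \<ge> Suc (max N M)" "(\<Sum>k<m. \<sigma> * x k) \<le> real m * real_of_rat b" using H by blast
    define n where "n = m - 1"
    have mn: "m = Suc n" using m(1) unfolding n_def by simp
    have nN: "n \<ge> N" "n \<ge> M" using m(1) mn by auto
    have sum: "(\<Sum>k<m. \<sigma> * x k) = \<sigma> * x 0 + (\<Sum>k<n. \<sigma> * shiftp x k)"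
      unfolding mn by (subst sum.lessThan_Suc_shift) (simp add: shiftp_def del: sum.lessThan_Suc)
    have d: "real_of_rat b' - real_of_rat b > 0" using b' by simp
    have "real n * (real_of_rat b' - real_of_rat b) \<ge> real M * (real_of_rat b' - real_of_rat b)"
      using nN d by (intro mult_right_mono) auto
    moreover have "real M * (real_of_rat b' - real_of_rat b) \<ge> real_of_rat b - \<sigma> * x 0"
      using M d by (simp add: pos_divide_le_eq)
    ultimately have "real n * real_of_rat b' \<ge> real n * real_of_rat b + real_of_rat b - \<sigma> * x 0"
      by (simp add: algebra_simps)
    moreover have "(\<Sum>k<n. \<sigma> * shiftp x k) \<le> real n * real_of_rat b + real_of_rat b - \<sigma> * x 0"
      using m(2) sum unfolding mn by (simp add: algebra_simps)
    ultimately show "\<exists>n\<ge>N. (\<Sum>k<n. \<sigma> * shiftp x k) \<le> real n * real_of_rat b'"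
      using nN by (intro exI[of _ n]) auto
  qed
  then show "shiftp x \<in> Bset \<sigma> a" unfolding Bset_def using b' by blast
next
  assume "shiftp x \<in> Bset \<sigma> a"
  then obtain b :: rat where b: "real_of_rat b < a" and H: "\<forall>N::nat. \<exists>n\<ge>N. (\<Sum>k<n. \<sigma> * shiftp x k) \<le> real n * real_of_rat b"
    unfolding Bset_def by blast
  obtain b' :: rat where b': "real_of_rat b < real_of_rat b'" "real_of_rat b' < a" using of_rat_dense[OF b] by blast
  have "\<forall>N::nat. \<exists>n\<ge>N. (\<Sum>k<n. \<sigma> * x k) \<le> real n * real_of_rat b'"
  proof
    fix N :: nat
    obtain M :: nat where M: "real M \<ge> (\<sigma> * x 0 - real_of_rat b') / (real_of_rat b' - real_of_rat b)"
      using real_arch_simple by blast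
    obtain n where n: "n \<ge> max N M" "(\<Sum>k<n. \<sigma> * shiftp x k) \<le> real n * real_of_rat b" using H by blast
    have sum: "(\<Sum>k<Suc n. \<sigma> * x k) = \<sigma> * x 0 + (\<Sum>k<n. \<sigma> * shiftp x k)"
      by (subst sum.lessThan_Suc_shift) (simp add: shiftp_def del: sum.lessThan_Suc)
    have d: "real_of_rat b' - real_of_rat b > 0" using b' by simp
    have "real n * (real_of_rat b' - real_of_rat b) \<ge> real M * (real_of_rat b' - real_of_rat b)"
      using n d by (intro mult_right_mono) auto
    moreover have "real M * (real_of_rat b' - real_of_rat b) \<ge> \<sigma> * x 0 - real_of_rat b'"
      using M d by (simp add: pos_divide_le_eq)
    ultimately have "real (Suc n) * real_of_rat b' \<ge> \<sigma> * x 0 + real n * real_of_rat b"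
      by (simp add: algebra_simps)
    then show "\<exists>n'\<ge>N. (\<Sum>k<n'. \<sigma> * x k) \<le> real n' * real_of_rat b'"
      using n sum by (intro exI[of _ "Suc n"]) auto
  qed
  then show "x \<in> Bset \<sigma> a" unfolding Bset_def using b' by blast
qed

lemma Bset_invk: "x \<in> Bset \<sigma> a \<longleftrightarrow> shiftk k x \<in> Bset \<sigma> a"
proof (induction k arbitrary: x)
  case 0 then show ?case by simp
next
  case (Suc k) then show ?case using Bset_inv by (simp add: shiftk_Suc')
qed

lemma Bset_zero:
  fixes P :: "(nat \<Rightarrow> real) measure"
  assumes sP: "sets P = sets path_space" and ps: "prob_space P"
    and inv: "distr P path_space shiftp = P"
    and erg: "\<And>A. A \<in> sets path_space \<Longrightarrow> (\<forall>x. x \<in> A \<longleftrightarrow> shiftp x \<in> A) \<Longrightarrow> measure P A \<in> {0,1}"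
    and int: "integrable P (\<lambda>x. x 0)"
    and a: "a < \<sigma> * integral\<^sup>L P (\<lambda>x. x 0)"
  shows "measure P (Bset \<sigma> a) = 0"
proof (rule ccontr)
  interpret prob_space P by fact
  have meq: "measurable P = measurable path_space" by (intro ext measurable_cong_sets) (auto simp: sP)
  assume ne: "measure P (Bset \<sigma> a) \<noteq> 0"
  have Bs: "Bset \<sigma> a \<in> sets P" using Bset_sets sP by simp
  have "measure P (Bset \<sigma> a) \<in> {0,1}" using erg[OF Bset_sets] Bset_inv by blast
  with ne have one: "prob (Bset \<sigma> a) = 1" by simp
  have AEB: "AE x in P. x \<in> Bset \<sigma> a" using AE_in_set_eq_1[OF Bs] one by simp
  define h where "h x = (if x \<in> Bset \<sigma> a then a - \<sigma> * x 0 else 0)" for x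
  have x0m[measurable]: "(\<lambda>x::nat\<Rightarrow>real. x 0) \<in> borel_measurable path_space" by simp
  have Bsm[measurable]: "Bset \<sigma> a \<in> sets path_space" by (rule Bset_sets)
  have hm[measurable]: "h \<in> borel_measurable path_space" unfolding h_def by measurable
  have hint: "integrable P h"
  proof (rule Bochner_Integration.integrable_bound)
    show "integrable P (\<lambda>x. \<bar>a\<bar> + \<bar>\<sigma>\<bar> * \<bar>x 0\<bar>)" using int by simp
    show "h \<in> borel_measurable P" by (simp add: meq)
    show "AE x in P. norm (h x) \<le> norm (\<bar>a\<bar> + \<bar>\<sigma>\<bar> * \<bar>x 0\<bar>)"
      by (intro AE_I2) (auto simp: h_def abs_mult intro: abs_triangle_ineq4[THEN order_trans])
  qed
  have Ssum: "(\<Sum>k<n. h (shiftk k x)) = (if x \<in> Bset \<sigma> a then real n * a - (\<Sum>k<n. \<sigma> * x k) else 0)" for n x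
  proof -
    have "(\<Sum>k<n. h (shiftk k x)) = (\<Sum>k<n. if x \<in> Bset \<sigma> a then a - \<sigma> * x k else 0)"
      by (intro sum.cong refl) (simp add: h_def Bset_invk[symmetric] shiftk_app)
    then show ?thesis by (simp add: sum_subtractf)
  qed
  have E: "(if (\<exists>n. (\<Sum>k<n. h (shiftk k x)) > 0) then h x else 0) = h x" for x
  proof (cases "x \<in> Bset \<sigma> a")
    case True
    then obtain b :: rat where b: "real_of_rat b < a" and H: "\<forall>N::nat. \<exists>n\<ge>N. (\<Sum>k<n. \<sigma> * x k) \<le> real n * real_of_rat b"
      unfolding Bset_def by blast
    obtain n where n: "n \<ge> 1" "(\<Sum>k<n. \<sigma> * x k) \<le> real n * real_of_rat b" using H by blast
    have "real n * real_of_rat b < real n * a" using n(1) b by simp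
    then have "(\<Sum>k<n. h (shiftk k x)) > 0" using True n(2) by (simp add: Ssum)
    then show ?thesis by auto
  next
    case False then show ?thesis by (simp add: h_def)
  qed
  have "integral\<^sup>L P (\<lambda>x. if (\<exists>n. (\<Sum>k<n. h (shiftk k x)) > 0) then h x else 0) \<ge> 0"
    by (rule maximal_ergodic[OF sP _ inv hint]) (rule finite_measure_axioms)
  then have "integral\<^sup>L P h \<ge> 0" by (simp add: E)
  moreover have "integral\<^sup>L P h = integral\<^sup>L P (\<lambda>x. a - \<sigma> * x 0)"
    by (rule integral_cong_AE) (auto simp: meq h_def intro!: AE_mp[OF AEB AE_I2])
  moreover have "integral\<^sup>L P (\<lambda>x. a - \<sigma> * x 0) = a - \<sigma> * integral\<^sup>L P (\<lambda>x. x 0)"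
    using int prob_space by (simp add: Bochner_Integration.integral_diff)
  ultimately show False using a by simp
qed

lemma birkhoff_lower:
  fixes P :: "(nat \<Rightarrow> real) measure"
  assumes sP: "sets P = sets path_space" and ps: "prob_space P"
    and inv: "distr P path_space shiftp = P"
    and erg: "\<And>A. A \<in> sets path_space \<Longrightarrow> (\<forall>x. x \<in> A \<longleftrightarrow> shiftp x \<in> A) \<Longrightarrow> measure P A \<in> {0,1}"
    and int: "integrable P (\<lambda>x. x 0)"
  shows "AE x in P. \<forall>\<delta>>0. \<exists>n0. \<forall>n\<ge>n0. (\<Sum>k<n. \<sigma> * x k) \<ge> real n * (\<sigma> * integral\<^sup>L P (\<lambda>x. x 0) - \<delta>)"
proof -
  interpret prob_space P by fact
  define L where "L = \<sigma> * integral\<^sup>L P (\<lambda>x. x 0)"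
  have "AE x in P. x \<notin> Bset \<sigma> (real_of_rat a)" if "real_of_rat a < L" for a
  proof (rule AE_not_in)
    have "measure P (Bset \<sigma> (real_of_rat a)) = 0"
      by (rule Bset_zero[OF sP ps inv erg int]) (use that L_def in auto)
    moreover have "Bset \<sigma> (real_of_rat a) \<in> sets P" using Bset_sets sP by simp
    ultimately show "Bset \<sigma> (real_of_rat a) \<in> null_sets P" by (simp add: emeasure_eq_measure null_sets_def)
  qed
  then have "AE x in P. \<forall>a::rat. real_of_rat a < L \<longrightarrow> x \<notin> Bset \<sigma> (real_of_rat a)"
    by (subst AE_all_countable) auto
  then show ?thesis
  proof (rule AE_mp[OF _ AE_I2], intro impI allI)
    fix x :: "nat \<Rightarrow> real" and \<delta> :: real
    assume H: "\<forall>a::rat. real_of_rat a < L \<longrightarrow> x \<notin> Bset \<sigma> (real_of_rat a)" and d: "\<delta> > 0"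
    obtain a :: rat where a: "L - \<delta> < real_of_rat a" "real_of_rat a < L" using of_rat_dense[of "L - \<delta>" L] d by auto
    obtain b :: rat where b: "L - \<delta> < real_of_rat b" "real_of_rat b < real_of_rat a" using of_rat_dense[OF a(1)] by auto
    have "x \<notin> Bset \<sigma> (real_of_rat a)" using H a by auto
    then have "\<not> (\<forall>N::nat. \<exists>n\<ge>N. (\<Sum>k<n. \<sigma> * x k) \<le> real n * real_of_rat b)"
      unfolding Bset_def using b by blast
    then obtain N where N: "\<forall>n\<ge>N. (\<Sum>k<n. \<sigma> * x k) > real n * real_of_rat b" by (meson not_le)
    show "\<exists>n0. \<forall>n\<ge>n0. (\<Sum>k<n. \<sigma> * x k) \<ge> real n * (\<sigma> * integral\<^sup>L P (\<lambda>x. x 0) - \<delta>)"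
    proof (intro exI allI impI)
      fix n assume "n \<ge> N"
      then have "(\<Sum>k<n. \<sigma> * x k) > real n * real_of_rat b" using N by auto
      moreover have "real n * real_of_rat b \<ge> real n * (L - \<delta>)" using b by (intro mult_left_mono) auto
      ultimately show "(\<Sum>k<n. \<sigma> * x k) \<ge> real n * (\<sigma> * integral\<^sup>L P (\<lambda>x. x 0) - \<delta>)"
        unfolding L_def by linarith
    qed
  qed
qed


lemma path_measurable:
  assumes "\<And>t. X t \<in> borel_measurable M"
  shows "(\<lambda>\<omega> t. X t \<omega>) \<in> measurable M path_space"
  by (rule measurable_PiM_single') (auto simp: space_PiM assms)

lemma LLN_process:
  fixes M :: "'a measure" and X :: "nat \<Rightarrow> 'a \<Rightarrow> real"
  assumes ps: "prob_space M" and se: "stationary_ergodic M X" and int: "integrable M (X 0)"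
  shows "AE \<omega> in M. \<forall>\<delta>>0. \<exists>n0. \<forall>n\<ge>n0. \<bar>(\<Sum>t<n. X t \<omega>) - real n * integral\<^sup>L M (X 0)\<bar> \<le> \<delta> * real n"
proof -
  interpret prob_space M by fact
  have Xm: "\<And>t. X t \<in> borel_measurable M" and stat: "\<And>k. distr M path_space (\<lambda>\<omega> t. X (t + k) \<omega>) = distr M path_space (\<lambda>\<omega> t. X t \<omega>)"
    using se unfolding stationary_ergodic_def stationary_process_def by auto
  have erg: "\<And>A. A \<in> sets path_space \<Longrightarrow> (\<forall>x. x \<in> A \<longleftrightarrow> (\<lambda>t. x (Suc t)) \<in> A) \<Longrightarrow> measure M {\<omega> \<in> space M. (\<lambda>t. X t \<omega>) \<in> A} \<in> {0, 1}"
    using se unfolding stationary_ergodic_def ergodic_process_def by auto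
  define Xp where "Xp = (\<lambda>\<omega> t. X t \<omega>)"
  have Xpm[measurable]: "Xp \<in> measurable M path_space" unfolding Xp_def by (rule path_measurable[OF Xm])
  define P where "P = distr M path_space Xp"
  have sP: "sets P = sets path_space" unfolding P_def by simp
  have psP: "prob_space P" unfolding P_def by (rule prob_space_distr) simp
  have inv: "distr P path_space shiftp = P"
  proof -
    have "distr P path_space shiftp = distr M path_space (shiftp \<circ> Xp)"
      unfolding P_def by (rule distr_distr) auto
    also have "shiftp \<circ> Xp = (\<lambda>\<omega> t. X (t + 1) \<omega>)" by (auto simp: Xp_def shiftp_def fun_eq_iff)
    also have "distr M path_space \<dots> = P" unfolding P_def Xp_def by (rule stat)
    finally show ?thesis .
  qed
  have ergP: "measure P A \<in> {0,1}" if "A \<in> sets path_space" "\<forall>x. x \<in> A \<longleftrightarrow> shiftp x \<in> A" for A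
  proof -
    have "measure P A = measure M (Xp -` A \<inter> space M)" unfolding P_def using that by (simp add: measure_distr)
    also have "Xp -` A \<inter> space M = {\<omega> \<in> space M. (\<lambda>t. X t \<omega>) \<in> A}" by (auto simp: Xp_def)
    finally show ?thesis using erg[OF that(1)] that(2) by (simp add: shiftp_def)
  qed
  have x0m: "(\<lambda>x::nat\<Rightarrow>real. x 0) \<in> borel_measurable path_space" by simp
  have intP: "integrable P (\<lambda>x. x 0)" unfolding P_def
    using integrable_distr_eq[OF Xpm x0m] int by (simp add: Xp_def)
  have eqP: "integral\<^sup>L P (\<lambda>x. x 0) = integral\<^sup>L M (X 0)" unfolding P_def
    using integral_distr[OF Xpm x0m] by (simp add: Xp_def)
  have A1: "AE x in P. \<forall>\<delta>>0. \<exists>n0. \<forall>n\<ge>n0. (\<Sum>k<n. 1 * x k) \<ge> real n * (1 * integral\<^sup>L P (\<lambda>x. x 0) - \<delta>)"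
    by (rule birkhoff_lower[OF sP psP inv ergP intP])
  have A2: "AE x in P. \<forall>\<delta>>0. \<exists>n0. \<forall>n\<ge>n0. (\<Sum>k<n. (-1) * x k) \<ge> real n * ((-1) * integral\<^sup>L P (\<lambda>x. x 0) - \<delta>)"
    by (rule birkhoff_lower[OF sP psP inv ergP intP])
  have "AE x in P. \<forall>\<delta>>0. \<exists>n0. \<forall>n\<ge>n0. \<bar>(\<Sum>k<n. x k) - real n * integral\<^sup>L M (X 0)\<bar> \<le> \<delta> * real n"
    using AE_conjI[OF A1 A2]
  proof eventually_elim
    fix x :: "nat \<Rightarrow> real"
    assume H: "(\<forall>\<delta>>0. \<exists>n0. \<forall>n\<ge>n0. (\<Sum>k<n. 1 * x k) \<ge> real n * (1 * integral\<^sup>L P (\<lambda>x. x 0) - \<delta>)) \<and>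
       (\<forall>\<delta>>0. \<exists>n0. \<forall>n\<ge>n0. (\<Sum>k<n. (-1) * x k) \<ge> real n * ((-1) * integral\<^sup>L P (\<lambda>x. x 0) - \<delta>))"
    show "\<forall>\<delta>>0. (\<exists>n0. \<forall>n\<ge>n0. \<bar>(\<Sum>k<n. x k) - real n * integral\<^sup>L M (X 0)\<bar> \<le> \<delta> * real n)"
    proof (intro allI impI)
      fix \<delta> :: real
      assume d: "\<delta> > 0"
      obtain n1 where n1: "\<And>n. n \<ge> n1 \<Longrightarrow> (\<Sum>k<n. 1 * x k) \<ge> real n * (1 * integral\<^sup>L P (\<lambda>x. x 0) - \<delta>)"
        using H d by blast
      obtain n2 where n2: "\<And>n. n \<ge> n2 \<Longrightarrow> (\<Sum>k<n. (-1) * x k) \<ge> real n * ((-1) * integral\<^sup>L P (\<lambda>x. x 0) - \<delta>)"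
        using H d by blast
      show "\<exists>n0. \<forall>n\<ge>n0. \<bar>(\<Sum>k<n. x k) - real n * integral\<^sup>L M (X 0)\<bar> \<le> \<delta> * real n"
      proof (intro exI allI impI)
        fix n assume "max n1 n2 \<le> n"
        then have a: "(\<Sum>k<n. x k) \<ge> real n * integral\<^sup>L M (X 0) - \<delta> * real n"
          and b: "- (\<Sum>k<n. x k) \<ge> - real n * integral\<^sup>L M (X 0) - \<delta> * real n"
          using n1[of n] n2[of n] by (auto simp: eqP algebra_simps sum_negf)
        then show "\<bar>(\<Sum>k<n. x k) - real n * integral\<^sup>L M (X 0)\<bar> \<le> \<delta> * real n" by linarith
      qed
    qed
  qed
  then have "AE x in distr M path_space Xp. \<forall>\<delta>>0. \<exists>n0. \<forall>n\<ge>n0. \<bar>(\<Sum>k<n. x k) - real n * integral\<^sup>L M (X 0)\<bar> \<le> \<delta> * real n"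
    unfolding P_def .
  from AE_distrD[OF Xpm this] show ?thesis by (simp add: Xp_def)
qed


lemma bat_cong: "(\<And>k. k < t \<Longrightarrow> gg k = gg' k) \<Longrightarrow> batteries PS PD thr es ed gg t = batteries PS PD thr es ed gg' t"
proof (induction t)
  case 0 then show ?case by simp
next
  case (Suc t)
  then have "batteries PS PD thr es ed gg t = batteries PS PD thr es ed gg' t" by simp
  then show ?case using Suc.prems[of t] by (simp add: split_beta Let_def)
qed

definition batP :: "real \<Rightarrow> real \<Rightarrow> real \<Rightarrow> nat \<Rightarrow> ((nat\<Rightarrow>real)\<times>(nat\<Rightarrow>real))\<times>(nat\<Rightarrow>real) \<Rightarrow> real \<times> real" where
  "batP PS PD thr t x = batteries PS PD thr (fst (fst x)) (snd (fst x)) (snd x) t"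

lemma batP_measurable:
  "(\<lambda>x. fst (batP PS PD thr t x)) \<in> borel_measurable ((path_space \<Otimes>\<^sub>M path_space) \<Otimes>\<^sub>M path_space) \<and>
   (\<lambda>x. snd (batP PS PD thr t x)) \<in> borel_measurable ((path_space \<Otimes>\<^sub>M path_space) \<Otimes>\<^sub>M path_space)"
proof (induction t)
  case 0 then show ?case by (simp add: batP_def)
next
  case (Suc t)
  then have [measurable]: "(\<lambda>x. fst (batP PS PD thr t x)) \<in> borel_measurable ((path_space \<Otimes>\<^sub>M path_space) \<Otimes>\<^sub>M path_space)"
     "(\<lambda>x. snd (batP PS PD thr t x)) \<in> borel_measurable ((path_space \<Otimes>\<^sub>M path_space) \<Otimes>\<^sub>M path_space)" by auto
  have e1: "(\<lambda>x. fst (batP PS PD thr (Suc t) x)) = (\<lambda>x. fst (batP PS PD thr t x) + fst (fst x) t -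
       (if fst (batP PS PD thr t x) \<ge> PS \<and> snd (batP PS PD thr t x) \<ge> PD \<and> snd x t \<ge> thr then PS else 0))"
    by (simp add: batP_def split_beta Let_def fun_eq_iff)
  have e2: "(\<lambda>x. snd (batP PS PD thr (Suc t) x)) = (\<lambda>x. snd (batP PS PD thr t x) + snd (fst x) t -
       (if fst (batP PS PD thr t x) \<ge> PS \<and> snd (batP PS PD thr t x) \<ge> PD \<and> snd x t \<ge> thr then PD else 0))"
    by (simp add: batP_def split_beta Let_def fun_eq_iff)
  show ?case unfolding e1 e2 by measurable
qed

lemma nat_sqrt_exists:
  fixes n :: nat assumes "n \<ge> 1"
  shows "\<exists>s\<ge>1. s\<^sup>2 \<le> n \<and> n < (Suc s)\<^sup>2"
proof -
  define S where "S = {k::nat. k\<^sup>2 \<le> n}"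
  have fin: "finite S" unfolding S_def
    by (rule finite_subset[of _ "{..n}"]) (auto simp: power2_eq_square intro: order_trans[OF _ mult_le_mono1[of 1]] dest: le_square[THEN order_trans])
  have oneS: "1 \<in> S" using assms by (simp add: S_def)
  define s where "s = Max S"
  have sS: "s \<in> S" unfolding s_def using fin oneS by (intro Max_in) auto
  have s1: "s \<ge> 1" unfolding s_def using fin oneS by (simp add: Max_ge)
  have "Suc s \<notin> S"
  proof
    assume "Suc s \<in> S"
    then have "Suc s \<le> s" unfolding s_def using fin by simp
    then show False by simp
  qed
  then show ?thesis using sS s1 unfolding S_def by (intro exI[of _ s]) auto
qed

definition truncp :: "nat \<Rightarrow> (nat \<Rightarrow> real) \<Rightarrow> (nat \<Rightarrow> real)" where
  "truncp j x = (\<lambda>k. if k < j then x k else 0)"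

lemma measurable_truncp[measurable]: "truncp j \<in> measurable path_space path_space"
  unfolding truncp_def by (rule measurable_PiM_single') (auto simp: space_PiM)

locale setting = prob_space M for M :: "'a measure" +
  fixes ES ED g :: "nat \<Rightarrow> 'a \<Rightarrow> real"
  assumes ESm[measurable]: "\<And>t. ES t \<in> borel_measurable M"
    and EDm[measurable]: "\<And>t. ED t \<in> borel_measurable M"
    and gind: "indep_vars (\<lambda>_. borel) g UNIV"
    and indEG: "indep_set
           (sigma_sets (space M) {(\<lambda>\<omega>. (\<lambda>t. ES t \<omega>, \<lambda>t. ED t \<omega>)) -` A \<inter> space M
                                  | A. A \<in> sets (path_space \<Otimes>\<^sub>M path_space)})
           (sigma_sets (space M) {(\<lambda>\<omega> t. g t \<omega>) -` A \<inter> space M | A. A \<in> sets path_space})"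
begin

lemma gm[measurable]: "g t \<in> borel_measurable M"
  using gind unfolding indep_vars_def by auto

definition Ep where "Ep \<omega> = (\<lambda>t. ES t \<omega>, \<lambda>t. ED t \<omega>)"
definition Gp where "Gp \<omega> = (\<lambda>t. g t \<omega>)"
definition Tr where "Tr j \<omega> = truncp j (Gp \<omega>)"
definition V where "V j \<omega> = (Ep \<omega>, Tr j \<omega>)"

lemma Epm[measurable]: "Ep \<in> measurable M (path_space \<Otimes>\<^sub>M path_space)"
  unfolding Ep_def by (intro measurable_Pair path_measurable) auto

lemma Gpm[measurable]: "Gp \<in> measurable M path_space"
  unfolding Gp_def by (intro path_measurable) auto

lemma Trm[measurable]: "Tr j \<in> measurable M path_space"
  unfolding Tr_def by measurable

lemma Vm[measurable]: "V j \<in> measurable M ((path_space \<Otimes>\<^sub>M path_space) \<Otimes>\<^sub>M path_space)"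
  unfolding V_def by measurable

lemma T_indep:
  assumes C: "C \<in> sets path_space" and B: "B \<in> sets borel"
  shows "prob (Tr j -` C \<inter> space M \<inter> (g j -` B \<inter> space M)) = prob (Tr j -` C \<inter> space M) * prob (g j -` B \<inter> space M)"
proof -
  have iv: "indep_var (PiM {..<j} (\<lambda>_. borel)) (\<lambda>\<omega>. restrict (\<lambda>i. g i \<omega>) {..<j})
                      (PiM {j} (\<lambda>_. borel)) (\<lambda>\<omega>. restrict (\<lambda>i. g i \<omega>) {j})"
    by (rule indep_var_restrict[OF gind]) auto
  define Y1 where "Y1 = (\<lambda>f::nat\<Rightarrow>real. (\<lambda>k. if k < j then f k else 0))"
  define Y2 where "Y2 = (\<lambda>f::nat\<Rightarrow>real. (\<lambda>_::nat. f j))"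
  have Y1m: "Y1 \<in> measurable (PiM {..<j} (\<lambda>_. borel)) path_space"
    unfolding Y1_def
  proof (rule measurable_PiM_single')
    fix k :: nat
    show "(\<lambda>f::nat\<Rightarrow>real. if k < j then f k else 0) \<in> borel_measurable (PiM {..<j} (\<lambda>_. borel))"
      by (cases "k < j") (auto intro!: measurable_component_singleton)
  qed (auto simp: space_PiM)
  have Y2m: "Y2 \<in> measurable (PiM {j} (\<lambda>_. borel)) path_space"
    unfolding Y2_def by (rule measurable_PiM_single') (auto simp: space_PiM)
  have iv2: "indep_var path_space (Y1 \<circ> (\<lambda>\<omega>. restrict (\<lambda>i. g i \<omega>) {..<j})) path_space (Y2 \<circ> (\<lambda>\<omega>. restrict (\<lambda>i. g i \<omega>) {j}))"
    by (rule indep_var_compose[OF iv Y1m Y2m])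
  have e1: "Y1 \<circ> (\<lambda>\<omega>. restrict (\<lambda>i. g i \<omega>) {..<j}) = Tr j"
    by (auto simp: Y1_def Tr_def truncp_def Gp_def fun_eq_iff)
  have e2: "Y2 \<circ> (\<lambda>\<omega>. restrict (\<lambda>i. g i \<omega>) {j}) = (\<lambda>\<omega> _. g j \<omega>)"
    by (auto simp: Y2_def fun_eq_iff)
  define B' where "B' = {x::nat\<Rightarrow>real. x 0 \<in> B}"
  have B': "B' \<in> sets path_space"
  proof -
    have "(\<lambda>x::nat\<Rightarrow>real. x 0) -` B \<inter> space path_space \<in> sets path_space"
      by (rule measurable_sets[OF _ B]) simp
    then show ?thesis by (simp add: B'_def space_path vimage_def)
  qed
  have "prob ((\<lambda>x. (Tr j x, (\<lambda>_. g j x))) -` (C \<times> B') \<inter> space M) = prob (Tr j -` C \<inter> space M) * prob ((\<lambda>\<omega> _. g j \<omega>) -` B' \<inter> space M)"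
    using indep_varD[OF iv2[unfolded e1 e2] C B'] .
  moreover have "(\<lambda>x. (Tr j x, (\<lambda>_. g j x))) -` (C \<times> B') \<inter> space M = Tr j -` C \<inter> space M \<inter> (g j -` B \<inter> space M)"
    by (auto simp: B'_def)
  moreover have "(\<lambda>\<omega> _. g j \<omega>) -` B' \<inter> space M = g j -` B \<inter> space M" by (auto simp: B'_def)
  ultimately show ?thesis by simp
qed

definition F1 where "F1 j = {e \<inter> h | e h. e \<in> {Ep -` A \<inter> space M | A. A \<in> sets (path_space \<Otimes>\<^sub>M path_space)}
                                   \<and> h \<in> {Tr j -` C \<inter> space M | C. C \<in> sets path_space}}"
definition F2 where "F2 j = {g j -` B \<inter> space M | B. B \<in> sets borel}"

lemma key_indep: "indep_set (sigma_sets (space M) (F1 j)) (sigma_sets (space M) (F2 j))"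
proof (rule indep_set_sigma_sets)
  show "indep_set (F1 j) (F2 j)"
  proof (rule indep_setI)
    show "F1 j \<subseteq> events" unfolding F1_def by auto
    show "F2 j \<subseteq> events" unfolding F2_def by auto
    fix a b assume a: "a \<in> F1 j" and b: "b \<in> F2 j"
    then obtain A C B where A: "A \<in> sets (path_space \<Otimes>\<^sub>M path_space)" and C: "C \<in> sets path_space"
      and B: "B \<in> sets borel"
      and ab: "a = (Ep -` A \<inter> space M) \<inter> (Tr j -` C \<inter> space M)" "b = g j -` B \<inter> space M"
      unfolding F1_def F2_def by blast
    define e where "e = Ep -` A \<inter> space M"
    define h where "h = Tr j -` C \<inter> space M"
    define bb where "bb = g j -` B \<inter> space M"
    have eS: "e \<in> sigma_sets (space M) {(\<lambda>\<omega>. (\<lambda>t. ES t \<omega>, \<lambda>t. ED t \<omega>)) -` A \<inter> space M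
                                  | A. A \<in> sets (path_space \<Otimes>\<^sub>M path_space)}"
      unfolding e_def Ep_def using A by (intro sigma_sets.Basic) blast
    have hS: "h \<in> sigma_sets (space M) {(\<lambda>\<omega> t. g t \<omega>) -` A \<inter> space M | A. A \<in> sets path_space}"
    proof (intro sigma_sets.Basic CollectI exI conjI)
      show "h = (\<lambda>\<omega> t. g t \<omega>) -` (truncp j -` C \<inter> space path_space) \<inter> space M"
        unfolding h_def Tr_def Gp_def by (auto simp: space_path)
      show "truncp j -` C \<inter> space path_space \<in> sets path_space" using C by measurable
    qed
    have hbS: "h \<inter> bb \<in> sigma_sets (space M) {(\<lambda>\<omega> t. g t \<omega>) -` A \<inter> space M | A. A \<in> sets path_space}"
    proof (intro sigma_sets.Basic CollectI exI conjI)
      show "h \<inter> bb = (\<lambda>\<omega> t. g t \<omega>) -` ((truncp j -` C \<inter> space path_space) \<inter> ((\<lambda>x. x j) -` B \<inter> space path_space)) \<inter> space M"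
        unfolding h_def bb_def Tr_def Gp_def by (auto simp: space_path)
      show "(truncp j -` C \<inter> space path_space) \<inter> ((\<lambda>x. x j) -` B \<inter> space path_space) \<in> sets path_space"
        using C B by measurable
    qed
    have "prob (a \<inter> b) = prob (e \<inter> (h \<inter> bb))" unfolding ab e_def h_def bb_def by (simp add: Int_assoc)
    also have "\<dots> = prob e * prob (h \<inter> bb)" by (rule indep_setD[OF indEG eS hbS])
    also have "prob (h \<inter> bb) = prob h * prob bb" unfolding h_def bb_def by (rule T_indep[OF C B])
    also have "prob e * (prob h * prob bb) = prob (e \<inter> h) * prob bb"
      using indep_setD[OF indEG eS sigma_sets.Basic[OF CollectI]] hS by (simp add: indep_setD[OF indEG eS hS])
    finally show "prob (a \<inter> b) = prob a * prob b" unfolding ab e_def h_def bb_def by simp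
  qed
  show "Int_stable (F1 j)"
  proof (rule Int_stableI)
    fix a b assume "a \<in> F1 j" "b \<in> F1 j"
    then obtain A C A' C' where A: "A \<in> sets (path_space \<Otimes>\<^sub>M path_space)" "A' \<in> sets (path_space \<Otimes>\<^sub>M path_space)"
      and C: "C \<in> sets path_space" "C' \<in> sets path_space"
      and ab: "a = (Ep -` A \<inter> space M) \<inter> (Tr j -` C \<inter> space M)" "b = (Ep -` A' \<inter> space M) \<inter> (Tr j -` C' \<inter> space M)"
      unfolding F1_def by blast
    have "a \<inter> b = (Ep -` (A \<inter> A') \<inter> space M) \<inter> (Tr j -` (C \<inter> C') \<inter> space M)" unfolding ab by auto
    moreover have "A \<inter> A' \<in> sets (path_space \<Otimes>\<^sub>M path_space)" "C \<inter> C' \<in> sets path_space" using A C by auto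
    ultimately show "a \<inter> b \<in> F1 j" unfolding F1_def by blast
  qed
  show "Int_stable (F2 j)"
  proof (rule Int_stableI)
    fix a b assume "a \<in> F2 j" "b \<in> F2 j"
    then obtain B B' where "B \<in> sets borel" "B' \<in> sets borel" "a = g j -` B \<inter> space M" "b = g j -` B' \<inter> space M"
      unfolding F2_def by blast
    then show "a \<inter> b \<in> F2 j" unfolding F2_def by (intro CollectI exI[of _ "B \<inter> B'"]) auto
  qed
qed

lemma V_sigma:
  assumes S: "S \<in> sets ((path_space \<Otimes>\<^sub>M path_space) \<Otimes>\<^sub>M path_space)"
  shows "V j -` S \<inter> space M \<in> sigma_sets (space M) (F1 j)"
proof -
  let ?R = "{a \<times> b | a b. a \<in> sets (path_space \<Otimes>\<^sub>M path_space) \<and> b \<in> sets path_space}"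
  let ?\<Omega> = "space (path_space \<Otimes>\<^sub>M path_space) \<times> space path_space"
  have S': "S \<in> sigma_sets ?\<Omega> ?R" using S by (simp add: sets_pair_measure)
  have Vsp: "V j \<in> space M \<rightarrow> ?\<Omega>"
    using measurable_space[OF Vm[of j]] by (auto simp: space_pair_measure)
  have "V j -` S \<inter> space M \<in> {V j -` A \<inter> space M |A. A \<in> sigma_sets ?\<Omega> ?R}" using S' by blast
  also have "\<dots> = sigma_sets (space M) {V j -` A \<inter> space M |A. A \<in> ?R}"
    by (rule sigma_sets_vimage_commute[OF Vsp])
  also have "\<dots> \<subseteq> sigma_sets (space M) (F1 j)"
  proof (rule sigma_sets_subseteq, safe)
    fix a b assume a: "a \<in> sets (path_space \<Otimes>\<^sub>M path_space)" and b: "b \<in> sets path_space"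
    have "V j -` (a \<times> b) \<inter> space M = (Ep -` a \<inter> space M) \<inter> (Tr j -` b \<inter> space M)"
      by (auto simp: V_def)
    then show "V j -` (a \<times> b) \<inter> space M \<in> F1 j" unfolding F1_def using a b by blast
  qed
  finally show ?thesis .
qed

lemma indep_integral:
  fixes \<phi> :: "((nat\<Rightarrow>real)\<times>(nat\<Rightarrow>real))\<times>(nat\<Rightarrow>real) \<Rightarrow> real" and \<psi> :: "real \<Rightarrow> real"
  assumes \<phi>m: "\<phi> \<in> borel_measurable ((path_space \<Otimes>\<^sub>M path_space) \<Otimes>\<^sub>M path_space)"
    and \<psi>m: "\<psi> \<in> borel_measurable borel"
    and \<phi>b: "\<And>x. \<bar>\<phi> x\<bar> \<le> c1" and \<psi>b: "\<And>y. \<bar>\<psi> y\<bar> \<le> c2"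
  shows "(\<integral>\<omega>. \<phi> (V j \<omega>) * \<psi> (g j \<omega>) \<partial>M) = (\<integral>\<omega>. \<phi> (V j \<omega>) \<partial>M) * (\<integral>\<omega>. \<psi> (g j \<omega>) \<partial>M)"
proof (rule indep_var_lebesgue_integral)
  have X1m: "(\<lambda>\<omega>. \<phi> (V j \<omega>)) \<in> borel_measurable M" using \<phi>m by measurable
  have X2m: "(\<lambda>\<omega>. \<psi> (g j \<omega>)) \<in> borel_measurable M" using \<psi>m by measurable
  show "integrable M (\<lambda>\<omega>. \<phi> (V j \<omega>))"
    by (rule integrable_const_bound[where B=c1]) (use \<phi>b X1m in auto)
  show "integrable M (\<lambda>\<omega>. \<psi> (g j \<omega>))"
    by (rule integrable_const_bound[where B=c2]) (use \<psi>b X2m in auto)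
  show "indep_var borel (\<lambda>\<omega>. \<phi> (V j \<omega>)) borel (\<lambda>\<omega>. \<psi> (g j \<omega>))"
    unfolding indep_var_eq
  proof (intro conjI)
    show "random_variable borel (\<lambda>\<omega>. \<phi> (V j \<omega>))" by (rule X1m)
    show "random_variable borel (\<lambda>\<omega>. \<psi> (g j \<omega>))" by (rule X2m)
    have s1: "sigma_sets (space M) {(\<lambda>\<omega>. \<phi> (V j \<omega>)) -` A \<inter> space M |A. A \<in> sets borel} \<subseteq> sigma_sets (space M) (F1 j)"
    proof (rule sigma_sets_mono, safe)
      fix A :: "real set" assume A: "A \<in> sets borel"
      have "(\<lambda>\<omega>. \<phi> (V j \<omega>)) -` A \<inter> space M = V j -` (\<phi> -` A \<inter> space ((path_space \<Otimes>\<^sub>M path_space) \<Otimes>\<^sub>M path_space)) \<inter> space M"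
        using measurable_space[OF Vm[of j]] by auto
      also have "\<dots> \<in> sigma_sets (space M) (F1 j)"
        by (rule V_sigma) (rule measurable_sets[OF \<phi>m A])
      finally show "(\<lambda>\<omega>. \<phi> (V j \<omega>)) -` A \<inter> space M \<in> sigma_sets (space M) (F1 j)" .
    qed
    have s2: "sigma_sets (space M) {(\<lambda>\<omega>. \<psi> (g j \<omega>)) -` A \<inter> space M |A. A \<in> sets borel} \<subseteq> sigma_sets (space M) (F2 j)"
    proof (rule sigma_sets_mono, safe)
      fix A :: "real set" assume A: "A \<in> sets borel"
      have "(\<lambda>\<omega>. \<psi> (g j \<omega>)) -` A \<inter> space M = g j -` (\<psi> -` A \<inter> space borel) \<inter> space M" by auto
      moreover have "\<psi> -` A \<inter> space borel \<in> sets borel" by (rule measurable_sets[OF \<psi>m A])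
      ultimately show "(\<lambda>\<omega>. \<psi> (g j \<omega>)) -` A \<inter> space M \<in> sigma_sets (space M) (F2 j)"
        unfolding F2_def by (intro sigma_sets.Basic) blast
    qed
    show "indep_set (sigma_sets (space M) {(\<lambda>\<omega>. \<phi> (V j \<omega>)) -` A \<inter> space M |A. A \<in> sets borel})
                    (sigma_sets (space M) {(\<lambda>\<omega>. \<psi> (g j \<omega>)) -` A \<inter> space M |A. A \<in> sets borel})"
      using key_indep[of j] s1 s2 unfolding indep_sets2_eq by blast
  qed
qed

end

definition ind :: "bool \<Rightarrow> real" where "ind b = (if b then 1 else 0)"

lemma ind_simps[simp]: "ind True = 1" "ind False = 0" by (simp_all add: ind_def)
lemma ind_bound: "\<bar>ind b\<bar> \<le> 1" "ind b \<ge> 0" "ind b \<le> 1" by (simp_all add: ind_def)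
lemma ind_measurable[measurable]: "Measurable.pred M P \<Longrightarrow> (\<lambda>x. ind (P x)) \<in> borel_measurable M"
  unfolding ind_def by measurable

definition aP where "aP PS PD thr t x = (fst (batP PS PD thr t x) \<ge> PS \<and> snd (batP PS PD thr t x) \<ge> PD)"

lemma aP_measurable[measurable]: "Measurable.pred ((path_space \<Otimes>\<^sub>M path_space) \<Otimes>\<^sub>M path_space) (aP PS PD thr t)"
proof -
  have [measurable]: "(\<lambda>x. fst (batP PS PD thr t x)) \<in> borel_measurable ((path_space \<Otimes>\<^sub>M path_space) \<Otimes>\<^sub>M path_space)"
     "(\<lambda>x. snd (batP PS PD thr t x)) \<in> borel_measurable ((path_space \<Otimes>\<^sub>M path_space) \<Otimes>\<^sub>M path_space)"
    using batP_measurable by auto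
  show ?thesis unfolding aP_def by measurable
qed

context setting
begin

definition Aw where "Aw PS PD thr t \<omega> = (let B = batteries PS PD thr (\<lambda>s. ES s \<omega>) (\<lambda>s. ED s \<omega>) (\<lambda>s. g s \<omega>) t in fst B \<ge> PS \<and> snd B \<ge> PD)"

lemma Aw_V: "t \<le> j \<Longrightarrow> Aw PS PD thr t \<omega> = aP PS PD thr t (V j \<omega>)"
proof -
  assume tj: "t \<le> j"
  have "batteries PS PD thr (\<lambda>s. ES s \<omega>) (\<lambda>s. ED s \<omega>) (Tr j \<omega>) t = batteries PS PD thr (\<lambda>s. ES s \<omega>) (\<lambda>s. ED s \<omega>) (\<lambda>s. g s \<omega>) t"
    by (rule bat_cong) (use tj in \<open>auto simp: Tr_def truncp_def Gp_def\<close>)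
  then show ?thesis by (simp add: Aw_def aP_def batP_def V_def Ep_def Let_def)
qed

lemma Aw_measurable[measurable]: "Measurable.pred M (Aw PS PD thr t)"
proof -
  have "Measurable.pred M (\<lambda>\<omega>. aP PS PD thr t (V t \<omega>))" by measurable
  then show ?thesis by (subst fun_eq_iff[THEN iffD2, OF allI[of _ ], of _ "\<lambda>\<omega>. aP PS PD thr t (V t \<omega>)"]) (auto simp: Aw_V)
qed

context
  fixes PS PD thr q :: real
  assumes qdef: "\<And>j. prob {\<omega> \<in> space M. g j \<omega> \<ge> thr} = q"
begin

definition dd where "dd t \<omega> = ind (Aw PS PD thr t \<omega>) * (ind (g t \<omega> \<ge> thr) - q)"

lemma q01: "0 \<le> q" "q \<le> 1" using qdef[of 0] by auto

lemma dd_measurable[measurable]: "dd t \<in> borel_measurable M"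
  unfolding dd_def by measurable

lemma dd_bound: "\<bar>dd t \<omega>\<bar> \<le> 1"
  using q01 unfolding dd_def ind_def by (cases "Aw PS PD thr t \<omega>"; cases "g t \<omega> \<ge> thr") auto

lemma dd_prod_bound: "\<bar>dd t \<omega> * dd s \<omega>\<bar> \<le> 1"
proof -
  have "\<bar>dd t \<omega> * dd s \<omega>\<bar> = \<bar>dd t \<omega>\<bar> * \<bar>dd s \<omega>\<bar>" by (rule abs_mult)
  also have "\<dots> \<le> 1 * 1" by (rule mult_mono) (auto intro: dd_bound)
  finally show ?thesis by simp
qed

lemma dd_int[simp]: "integrable M (\<lambda>\<omega>. dd t \<omega> * dd s \<omega>)"
  by (rule integrable_const_bound[where B=1]) (auto intro!: dd_prod_bound)

lemma dd_cross: assumes "i < j" shows "(\<integral>\<omega>. dd i \<omega> * dd j \<omega> \<partial>M) = 0"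
proof -
  define \<phi> where "\<phi> x = ind (aP PS PD thr i x) * (ind (snd x i \<ge> thr) - q) * ind (aP PS PD thr j x)" for x
  define \<psi> where "\<psi> y = ind (y \<ge> thr) - q" for y
  have e: "dd i \<omega> * dd j \<omega> = \<phi> (V j \<omega>) * \<psi> (g j \<omega>)" for \<omega>
    using assms Aw_V[where t=i and j=j and PS=PS and PD=PD and thr=thr and \<omega>=\<omega>]
      Aw_V[where t=j and j=j and PS=PS and PD=PD and thr=thr and \<omega>=\<omega>]
    by (simp add: dd_def \<phi>_def \<psi>_def V_def Tr_def truncp_def Gp_def)
  have "(\<integral>\<omega>. \<phi> (V j \<omega>) * \<psi> (g j \<omega>) \<partial>M) = (\<integral>\<omega>. \<phi> (V j \<omega>) \<partial>M) * (\<integral>\<omega>. \<psi> (g j \<omega>) \<partial>M)"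
  proof (rule indep_integral)
    show "\<phi> \<in> borel_measurable ((path_space \<Otimes>\<^sub>M path_space) \<Otimes>\<^sub>M path_space)" unfolding \<phi>_def by measurable
    show "\<psi> \<in> borel_measurable borel" unfolding \<psi>_def by measurable
    show "\<bar>\<phi> x\<bar> \<le> 1" for x using q01 by (auto simp: \<phi>_def ind_def abs_mult)
    show "\<bar>\<psi> y\<bar> \<le> 1" for y using q01 by (auto simp: \<psi>_def ind_def)
  qed
  moreover have "(\<integral>\<omega>. \<psi> (g j \<omega>) \<partial>M) = 0"
  proof -
    have "(\<integral>\<omega>. \<psi> (g j \<omega>) \<partial>M) = (\<integral>\<omega>. indicator {\<omega> \<in> space M. g j \<omega> \<ge> thr} \<omega> - q \<partial>M)"
      by (rule Bochner_Integration.integral_cong) (auto simp: \<psi>_def ind_def indicator_def)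
    also have "\<dots> = prob {\<omega> \<in> space M. g j \<omega> \<ge> thr} - q"
    proof -
      have ms: "{\<omega> \<in> space M. g j \<omega> \<ge> thr} \<in> sets M" by measurable
      then have "integrable M (indicator {\<omega> \<in> space M. g j \<omega> \<ge> thr} :: 'a \<Rightarrow> real)"
        by (simp add: integrable_indicator_iff emeasure_eq_measure)
      then show ?thesis using ms by (subst Bochner_Integration.integral_diff) (auto simp: prob_space)
    qed
    finally show ?thesis using qdef by simp
  qed
  ultimately show ?thesis by (simp add: e)
qed

lemma second_moment: "(\<integral>\<omega>. (\<Sum>t<n. dd t \<omega>)\<^sup>2 \<partial>M) \<le> real n"
proof -
  have "(\<integral>\<omega>. (\<Sum>t<n. dd t \<omega>)\<^sup>2 \<partial>M) = (\<integral>\<omega>. (\<Sum>t<n. \<Sum>s<n. dd t \<omega> * dd s \<omega>) \<partial>M)"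
    by (simp add: power2_eq_square sum_product)
  also have "\<dots> = (\<Sum>t<n. \<Sum>s<n. (\<integral>\<omega>. dd t \<omega> * dd s \<omega> \<partial>M))"
    by (simp add: Bochner_Integration.integral_sum)
  also have "\<dots> = (\<Sum>t<n. (\<integral>\<omega>. dd t \<omega> * dd t \<omega> \<partial>M))"
  proof (intro sum.cong refl)
    fix t assume "t \<in> {..<n}"
    have "(\<Sum>s<n. (\<integral>\<omega>. dd t \<omega> * dd s \<omega> \<partial>M)) = (\<Sum>s<n. if s = t then (\<integral>\<omega>. dd t \<omega> * dd t \<omega> \<partial>M) else 0)"
    proof (intro sum.cong refl)
      fix s
      show "(\<integral>\<omega>. dd t \<omega> * dd s \<omega> \<partial>M) = (if s = t then (\<integral>\<omega>. dd t \<omega> * dd t \<omega> \<partial>M) else 0)"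
      proof (cases "s = t")
        case False
        then show ?thesis
        proof (cases "t < s")
          case True then show ?thesis using False dd_cross by simp
        next
          case F2: False
          then have "s < t" using False by simp
          then show ?thesis using False dd_cross[of s t] by (simp add: mult.commute)
        qed
      qed simp
    qed
    also have "\<dots> = (\<integral>\<omega>. dd t \<omega> * dd t \<omega> \<partial>M)" using \<open>t \<in> {..<n}\<close> by simp
    finally show "(\<Sum>s<n. (\<integral>\<omega>. dd t \<omega> * dd s \<omega> \<partial>M)) = (\<integral>\<omega>. dd t \<omega> * dd t \<omega> \<partial>M)" .
  qed
  also have "\<dots> \<le> (\<Sum>t<n. 1)"
  proof (intro sum_mono)
    fix t
    have "(\<integral>\<omega>. dd t \<omega> * dd t \<omega> \<partial>M) \<le> (\<integral>\<omega>. 1 \<partial>M)"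
      by (intro integral_mono) (auto intro!: abs_le_D1[OF dd_prod_bound])
    then show "(\<integral>\<omega>. dd t \<omega> * dd t \<omega> \<partial>M) \<le> 1" by (simp add: prob_space)
  qed
  finally show ?thesis by simp
qed

lemma dd_sum_diff: "m \<le> n \<Longrightarrow> \<bar>(\<Sum>t<n. dd t \<omega>) - (\<Sum>t<m. dd t \<omega>)\<bar> \<le> real n - real m"
proof (induction n rule: dec_induct)
  case base then show ?case by simp
next
  case (step k)
  have "\<bar>dd k \<omega>\<bar> \<le> 1" by (rule dd_bound)
  then show ?case using step by (simp add: abs_le_iff)
qed

lemma dd_sum_bound: "\<bar>\<Sum>t<n. dd t \<omega>\<bar> \<le> real n"
  using dd_sum_diff[of 0 n \<omega>] by simp

lemma markov_sq:
  assumes n: "n \<ge> 1" and e: "\<epsilon> > 0"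
  shows "prob {\<omega>\<in>space M. (\<Sum>t<n. dd t \<omega>)\<^sup>2 \<ge> (\<epsilon> * real n)\<^sup>2} \<le> 1 / (\<epsilon>\<^sup>2 * real n)"
proof -
  have um: "(\<lambda>\<omega>. (\<Sum>t<n. dd t \<omega>)\<^sup>2) \<in> borel_measurable M" by measurable
  have ui: "integrable M (\<lambda>\<omega>. (\<Sum>t<n. dd t \<omega>)\<^sup>2)"
  proof (rule integrable_const_bound[where B="(real n)\<^sup>2"])
    show "AE x in M. norm ((\<Sum>t<n. dd t x)\<^sup>2) \<le> (real n)\<^sup>2"
    proof (rule AE_I2)
      fix x
      have "\<bar>\<Sum>t<n. dd t x\<bar>\<^sup>2 \<le> (real n)\<^sup>2" by (rule power_mono[OF dd_sum_bound]) simp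
      then show "norm ((\<Sum>t<n. dd t x)\<^sup>2) \<le> (real n)\<^sup>2" by simp
    qed
  qed (rule um)
  have c: "(\<epsilon> * real n)\<^sup>2 > 0" using n e by simp
  have "prob {\<omega>\<in>space M. (\<Sum>t<n. dd t \<omega>)\<^sup>2 \<ge> (\<epsilon> * real n)\<^sup>2} \<le> (\<integral>\<omega>. (\<Sum>t<n. dd t \<omega>)\<^sup>2 \<partial>M) / (\<epsilon> * real n)\<^sup>2"
    by (rule integral_Markov_inequality_measure[OF ui _ _ c, of "space M"]) auto
  also have "\<dots> \<le> real n / (\<epsilon> * real n)\<^sup>2"
    using second_moment[of n] c by (intro divide_right_mono) auto
  also have "\<dots> = 1 / (\<epsilon>\<^sup>2 * real n)" using n by (simp add: power2_eq_square field_simps)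
  finally show ?thesis .
qed

lemma sq_events:
  assumes e: "\<epsilon> > 0"
  shows "AE \<omega> in M. eventually (\<lambda>j. \<bar>\<Sum>t<(Suc j)\<^sup>2. dd t \<omega>\<bar> < \<epsilon> * real ((Suc j)\<^sup>2)) sequentially"
proof -
  define A where "A j = {\<omega>\<in>space M. (\<Sum>t<(Suc j)\<^sup>2. dd t \<omega>)\<^sup>2 \<ge> (\<epsilon> * real ((Suc j)\<^sup>2))\<^sup>2}" for j
  have Am: "A j \<in> sets M" for j unfolding A_def by measurable
  have Af: "emeasure M (A j) < \<infinity>" for j by (simp add: emeasure_eq_measure)
  have Ab: "measure M (A j) \<le> 1 / \<epsilon>\<^sup>2 * inverse (real (Suc j) ^ 2)" for j
  proof -
    have "measure M (A j) \<le> 1 / (\<epsilon>\<^sup>2 * real ((Suc j)\<^sup>2))" unfolding A_def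
      by (rule markov_sq[OF _ e]) simp
    also have "\<dots> = 1 / \<epsilon>\<^sup>2 * inverse (real (Suc j) ^ 2)" by (simp add: field_simps)
    finally show ?thesis .
  qed
  have "summable (\<lambda>j. inverse (real j ^ 2))" by (rule inverse_power_summable) simp
  then have "summable (\<lambda>j. inverse (real (Suc j) ^ 2))" by (subst summable_Suc_iff)
  then have s: "summable (\<lambda>j. 1 / \<epsilon>\<^sup>2 * inverse (real (Suc j) ^ 2))" by (rule summable_mult)
  have "summable (\<lambda>j. measure M (A j))"
    by (rule summable_comparison_test[OF _ s]) (use Ab in auto)
  from borel_cantelli_AE1[OF Am Af this]
  have "AE \<omega> in M. eventually (\<lambda>j. \<omega> \<in> space M - A j) sequentially" .
  then show ?thesis
  proof (rule AE_mp[OF _ AE_I2], intro impI)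
    fix \<omega> assume "\<omega> \<in> space M" and ev: "eventually (\<lambda>j. \<omega> \<in> space M - A j) sequentially"
    show "eventually (\<lambda>j. \<bar>\<Sum>t<(Suc j)\<^sup>2. dd t \<omega>\<bar> < \<epsilon> * real ((Suc j)\<^sup>2)) sequentially"
      using ev
    proof (rule eventually_mono)
      fix j assume "\<omega> \<in> space M - A j"
      then have "(\<Sum>t<(Suc j)\<^sup>2. dd t \<omega>)\<^sup>2 < (\<epsilon> * real ((Suc j)\<^sup>2))\<^sup>2" unfolding A_def by auto
      then have "\<bar>\<Sum>t<(Suc j)\<^sup>2. dd t \<omega>\<bar>\<^sup>2 < (\<epsilon> * real ((Suc j)\<^sup>2))\<^sup>2" by simp
      then show "\<bar>\<Sum>t<(Suc j)\<^sup>2. dd t \<omega>\<bar> < \<epsilon> * real ((Suc j)\<^sup>2)"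
        by (rule power_less_imp_less_base) (use e in simp)
    qed
  qed
qed

lemma mart_LLN: "AE \<omega> in M. \<forall>\<delta>>0. \<exists>n0. \<forall>n\<ge>n0. \<bar>\<Sum>t<n. dd t \<omega>\<bar> \<le> \<delta> * real n"
proof -
  have "AE \<omega> in M. \<forall>m::nat. eventually (\<lambda>j. \<bar>\<Sum>t<(Suc j)\<^sup>2. dd t \<omega>\<bar> < 1 / real (Suc m) * real ((Suc j)\<^sup>2)) sequentially"
  proof (subst AE_all_countable, intro allI)
    fix m :: nat
    show "AE \<omega> in M. eventually (\<lambda>j. \<bar>\<Sum>t<(Suc j)\<^sup>2. dd t \<omega>\<bar> < 1 / real (Suc m) * real ((Suc j)\<^sup>2)) sequentially"
      by (rule sq_events) simp
  qed
  then show ?thesis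
  proof eventually_elim
    fix \<omega>
    assume H: "\<forall>m::nat. eventually (\<lambda>j. \<bar>\<Sum>t<(Suc j)\<^sup>2. dd t \<omega>\<bar> < 1 / real (Suc m) * real ((Suc j)\<^sup>2)) sequentially"
    show "\<forall>\<delta>>0. (\<exists>n0. \<forall>n\<ge>n0. \<bar>\<Sum>t<n. dd t \<omega>\<bar> \<le> \<delta> * real n)"
    proof (intro allI impI)
      fix \<delta> :: real
      assume d: "\<delta> > 0"
      obtain m :: nat where m: "real m \<ge> 2 / \<delta>" using real_arch_simple by blast
      define \<epsilon> where "\<epsilon> = 1 / real (Suc m)"
      have e0: "\<epsilon> > 0" unfolding \<epsilon>_def by simp
      have ed: "\<epsilon> \<le> \<delta> / 2"
      proof -
        have "2 / \<delta> \<le> real (Suc m)" using m by simp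
        then have "2 \<le> \<delta> * real (Suc m)" using d by (simp add: divide_le_eq mult.commute)
        then show ?thesis unfolding \<epsilon>_def using d by (simp add: field_simps)
      qed
      obtain J0 where J0: "\<And>j. j \<ge> J0 \<Longrightarrow> \<bar>\<Sum>t<(Suc j)\<^sup>2. dd t \<omega>\<bar> < \<epsilon> * real ((Suc j)\<^sup>2)"
        using H[rule_format, of m] unfolding eventually_sequentially \<epsilon>_def by blast
      obtain K :: nat where K: "real K \<ge> 4 / \<delta>" using real_arch_simple by blast
      define S0 where "S0 = max (Suc J0) K"
      show "\<exists>n0. \<forall>n\<ge>n0. \<bar>\<Sum>t<n. dd t \<omega>\<bar> \<le> \<delta> * real n"
      proof (intro exI allI impI)
        fix n assume n: "n \<ge> S0\<^sup>2"
        have "S0 \<ge> 1" unfolding S0_def by simp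
        then have "n \<ge> 1" using n by (metis le_trans one_le_power)
        then obtain s where s: "s \<ge> 1" "s\<^sup>2 \<le> n" "n < (Suc s)\<^sup>2" using nat_sqrt_exists by blast
        have sS0: "s \<ge> S0"
        proof (rule ccontr)
          assume "\<not> s \<ge> S0"
          then have "Suc s \<le> S0" by simp
          then have "(Suc s)\<^sup>2 \<le> S0\<^sup>2" by (rule power_mono) simp
          then show False using s(3) n by linarith
        qed
        define j where "j = s - 1"
        have sj: "Suc j = s" using s(1) unfolding j_def by simp
        have jJ: "j \<ge> J0" using sS0 sj unfolding S0_def by simp
        have a: "\<bar>\<Sum>t<s\<^sup>2. dd t \<omega>\<bar> < \<epsilon> * real (s\<^sup>2)" using J0[OF jJ] sj by simp
        have b: "\<bar>(\<Sum>t<n. dd t \<omega>) - (\<Sum>t<s\<^sup>2. dd t \<omega>)\<bar> \<le> real n - real (s\<^sup>2)"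
          by (rule dd_sum_diff[OF s(2)])
        have c: "real n - real (s\<^sup>2) \<le> 2 * real s"
        proof -
          have "n \<le> s\<^sup>2 + 2 * s" using s(3) by (simp add: power2_eq_square)
          then have "real n \<le> real (s\<^sup>2 + 2 * s)" by (simp only: of_nat_le_iff)
          then show ?thesis by simp
        qed
        have "real s \<ge> 4 / \<delta>" using K sS0 unfolding S0_def by (meson max.cobounded2 of_nat_le_iff order_trans)
        then have "4 \<le> \<delta> * real s" using d by (simp add: divide_le_eq mult.commute)
        then have "2 * real s \<le> \<delta> / 2 * (real s * real s)"
        proof -
          have "4 * real s \<le> (\<delta> * real s) * real s" using \<open>4 \<le> \<delta> * real s\<close> by (intro mult_right_mono) auto
          then show ?thesis by (simp add: algebra_simps)
        qed
        also have "\<dots> \<le> \<delta> / 2 * real n"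
          using s(2) d by (intro mult_left_mono) (simp_all add: power2_eq_square of_nat_mult[symmetric] del: of_nat_mult)
        finally have c2: "2 * real s \<le> \<delta> / 2 * real n" .
        have "\<epsilon> * real (s\<^sup>2) \<le> \<delta> / 2 * real n"
          using ed e0 s(2) by (intro mult_mono) auto
        then show "\<bar>\<Sum>t<n. dd t \<omega>\<bar> \<le> \<delta> * real n" using a b c c2 by linarith
      qed
    qed
  qed
qed

end

end


lemma (in prob_space) exp_ge:
  assumes D: "distributed M lborel X (exponential_density 1)" and a: "0 \<le> a"
  shows "prob {x\<in>space M. X x \<ge> a} = exp (- a)"
proof -
  have Xm[measurable]: "X \<in> borel_measurable M"
    using distributed_measurable[OF D] by simp
  have null: "X -` {a} \<inter> space M \<in> null_sets M"
  proof -
    have "emeasure M (X -` {a} \<inter> space M) = (\<integral>\<^sup>+x. ennreal (exponential_density 1 x) * indicator {a} x \<partial>lborel)"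
      by (rule distributed_emeasure[OF D]) simp
    also have "\<dots> = 0"
    proof (subst nn_integral_0_iff_AE)
      show "(\<lambda>x. ennreal (exponential_density 1 x) * indicator {a} x) \<in> borel_measurable lborel" by measurable
      show "AE x in lborel. ennreal (exponential_density 1 x) * indicator {a} x = 0"
        using AE_lborel_singleton[of a] by (auto elim!: eventually_mono)
    qed
    finally show ?thesis by (auto simp: null_sets_def)
  qed
  have "{x\<in>space M. X x \<ge> a} = {x\<in>space M. a < X x} \<union> (X -` {a} \<inter> space M)" by auto
  then have "prob {x\<in>space M. X x \<ge> a} = prob {x\<in>space M. a < X x}"
    using measure_Un_null_set[OF _ null, of "{x\<in>space M. a < X x}"] by simp
  also have "\<dots> = exp (- a * 1)" by (rule exponential_distributedD_gt[OF D a]) simp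
  finally show ?thesis by simp
qed

theorem corollary3:
  fixes M :: "'a measure"
    and ES ED g :: "nat \<Rightarrow> 'a \<Rightarrow> real"
    and lamS lamD R z \<alpha> PCS PS PD :: real
  assumes "prob_space M"
    and "stationary_ergodic M ES" and "stationary_ergodic M ED"
    and "\<And>t \<omega>. \<omega> \<in> space M \<Longrightarrow> ES t \<omega> \<ge> 0"
    and "\<And>t \<omega>. \<omega> \<in> space M \<Longrightarrow> ED t \<omega> \<ge> 0"
    and "integrable M (ES 0)" and "integral\<^sup>L M (ES 0) = lamS" and "lamS > 0"
    and "integrable M (ED 0)" and "integral\<^sup>L M (ED 0) = lamD" and "lamD > 0"
    and "prob_space.indep_vars M (\<lambda>_. borel) g UNIV"
    and "\<And>t. distributed M lborel (g t) (exponential_density 1)"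
    and "prob_space.indep_set M
           (sigma_sets (space M) {(\<lambda>\<omega>. (\<lambda>t. ES t \<omega>, \<lambda>t. ED t \<omega>)) -` A \<inter> space M
                                  | A. A \<in> sets (path_space \<Otimes>\<^sub>M path_space)})
           (sigma_sets (space M) {(\<lambda>\<omega> t. g t \<omega>) -` A \<inter> space M | A. A \<in> sets path_space})"
    and "R > 0" and "z > 0" and "\<alpha> > 0" and "PCS \<ge> 0" and "PS > PCS" and "PD > 0"
  shows "(\<lambda>n. (\<Sum>t<n. measure M {\<omega> \<in> space M.
             let B = batteries PS PD ((2 powr R - 1) * z / tx_power PS PCS \<alpha>)
                       (\<lambda>s. ES s \<omega>) (\<lambda>s. ED s \<omega>) (\<lambda>s. g s \<omega>) t
             in fst B \<ge> PS \<and> snd B \<ge> PD}) / real n)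
         \<longlonglongrightarrow> min 1 (min (lamS / ((1 - outage_prob R z (tx_power PS PCS \<alpha>)) * PS))
                           (lamD / ((1 - outage_prob R z (tx_power PS PCS \<alpha>)) * PD)))"
proof -
  interpret prob_space M by (rule assms(1))
  have ESm: "\<And>t. ES t \<in> borel_measurable M" and EDm: "\<And>t. ED t \<in> borel_measurable M"
    using assms(2,3) unfolding stationary_ergodic_def stationary_process_def by auto
  interpret S: setting M ES ED g
    by unfold_locales (use ESm EDm assms(12,14) in auto)
  define Ptx where "Ptx = tx_power PS PCS \<alpha>"
  define thr where "thr = (2 powr R - 1) * z / Ptx"
  define q where "q = exp (- thr)"
  define c where "c = min 1 (min (lamS / (q * PS)) (lamD / (q * PD)))"
  have Ptx: "Ptx > 0" unfolding Ptx_def tx_power_def using assms by simp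
  have "2 powr R > 1" using assms(15) by (simp add: gr_one_powr)
  then have thr0: "thr \<ge> 0" unfolding thr_def using Ptx assms(16) by simp
  have qdef: "\<And>j. prob {\<omega> \<in> space M. g j \<omega> \<ge> thr} = q"
    unfolding q_def by (rule exp_ge[OF assms(13) thr0])
  have q_eq: "1 - outage_prob R z Ptx = q" unfolding outage_prob_def q_def thr_def by simp
  have qpos: "q > 0" unfolding q_def by simp
  have PSpos: "PS > 0" using assms by linarith
  define K where "K n \<omega> = (\<Sum>t<n. ind (S.Aw PS PD thr t \<omega>))" for n \<omega>
  have LS: "AE \<omega> in M. \<forall>\<delta>>0. \<exists>n0. \<forall>n\<ge>n0. \<bar>(\<Sum>t<n. ES t \<omega>) - real n * lamS\<bar> \<le> \<delta> * real n"
    using LLN_process[OF assms(1,2,6)] assms(7) by simp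
  have LD: "AE \<omega> in M. \<forall>\<delta>>0. \<exists>n0. \<forall>n\<ge>n0. \<bar>(\<Sum>t<n. ED t \<omega>) - real n * lamD\<bar> \<le> \<delta> * real n"
    using LLN_process[OF assms(1,3,9)] assms(10) by simp
  have LM: "AE \<omega> in M. \<forall>\<delta>>0. \<exists>n0. \<forall>n\<ge>n0. \<bar>\<Sum>t<n. S.dd PS PD thr q t \<omega>\<bar> \<le> \<delta> * real n"
    by (rule S.mart_LLN[OF qdef])
  have conv: "AE \<omega> in M. (\<lambda>n. K n \<omega> / real n) \<longlonglongrightarrow> c"
    using AE_space LS LD LM
  proof eventually_elim
    fix \<omega> assume \<omega>: "\<omega> \<in> space M"
      and hS: "\<forall>\<delta>>0. \<exists>n0. \<forall>n\<ge>n0. \<bar>(\<Sum>t<n. ES t \<omega>) - real n * lamS\<bar> \<le> \<delta> * real n"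
      and hD: "\<forall>\<delta>>0. \<exists>n0. \<forall>n\<ge>n0. \<bar>(\<Sum>t<n. ED t \<omega>) - real n * lamD\<bar> \<le> \<delta> * real n"
      and hM: "\<forall>\<delta>>0. \<exists>n0. \<forall>n\<ge>n0. \<bar>\<Sum>t<n. S.dd PS PD thr q t \<omega>\<bar> \<le> \<delta> * real n"
    define bat where "bat = batteries PS PD thr (\<lambda>s. ES s \<omega>) (\<lambda>s. ED s \<omega>) (\<lambda>s. g s \<omega>)"
    define A where "A t = S.Aw PS PD thr t \<omega>" for t
    define G where "G t = (g t \<omega> \<ge> thr)" for t
    define N where "N n = (\<Sum>t<n. if A t \<and> G t then 1 else 0::real)" for n
    define KK where "KK n = (\<Sum>t<n. if A t then 1 else 0::real)" for n
    have A_eq: "A t \<longleftrightarrow> fst (bat t) \<ge> PS \<and> snd (bat t) \<ge> PD" for t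
      unfolding A_def bat_def S.Aw_def Let_def by simp
    have NN: "(\<Sum>t<n. if fst (bat t) \<ge> PS \<and> snd (bat t) \<ge> PD \<and> g t \<omega> \<ge> thr then 1 else 0) = N n" for n
      unfolding N_def by (intro sum.cong refl) (simp add: A_eq G_def)
    have "(\<lambda>n. KK n / real n) \<longlonglongrightarrow> min 1 (min (lamS / (q * PS)) (lamD / (q * PD)))"
    proof (rule det_limit[where N=N and K=KK and A=A and G=G and bs="\<lambda>n. fst (bat n)" and bd="\<lambda>n. snd (bat n)"
          and es="\<lambda>t. ES t \<omega>" and ed="\<lambda>t. ED t \<omega>"])
      show "\<And>n. N n = (\<Sum>t<n. if A t \<and> G t then 1 else 0)" by (simp add: N_def)
      show "\<And>n. KK n = (\<Sum>t<n. if A t then 1 else 0)" by (simp add: KK_def)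
      have bf: "fst (bat n) = (\<Sum>t<n. ES t \<omega>) - PS * (\<Sum>t<n. if fst (bat t) \<ge> PS \<and> snd (bat t) \<ge> PD \<and> g t \<omega> \<ge> thr then 1 else 0)"
        and bf2: "snd (bat n) = (\<Sum>t<n. ED t \<omega>) - PD * (\<Sum>t<n. if fst (bat t) \<ge> PS \<and> snd (bat t) \<ge> PD \<and> g t \<omega> \<ge> thr then 1 else 0)" for n
        unfolding bat_def by (rule conjunct1[OF bat_formula], rule conjunct2[OF bat_formula])
      show "\<And>n. fst (bat n) = (\<Sum>t<n. ES t \<omega>) - PS * N n"
        using bf NN by metis
      show "\<And>n. snd (bat n) = (\<Sum>t<n. ED t \<omega>) - PD * N n"
        using bf2 NN by metis
      show "\<And>t. A t \<longleftrightarrow> fst (bat t) \<ge> PS \<and> snd (bat t) \<ge> PD" by (rule A_eq)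
      show "\<And>n. fst (bat n) \<ge> 0" unfolding bat_def
        by (rule bat_nonneg) (use assms(4)[OF \<omega>] PSpos in auto)
      show "\<And>n. snd (bat n) \<ge> 0" unfolding bat_def
        by (rule bat_nonneg2) (use assms(5)[OF \<omega>] assms in auto)
      show "PS > 0" "PD > 0" "q > 0" using PSpos assms qpos by auto
      show "\<And>\<delta>. \<delta> > 0 \<Longrightarrow> \<exists>n0. \<forall>n\<ge>n0. \<bar>(\<Sum>t<n. ES t \<omega>) - real n * lamS\<bar> \<le> \<delta> * real n" using hS by blast
      show "\<And>\<delta>. \<delta> > 0 \<Longrightarrow> \<exists>n0. \<forall>n\<ge>n0. \<bar>(\<Sum>t<n. ED t \<omega>) - real n * lamD\<bar> \<le> \<delta> * real n" using hD by blast
      have "(\<Sum>t<n. S.dd PS PD thr q t \<omega>) = N n - q * KK n" for n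
      proof -
        have "S.dd PS PD thr q t \<omega> = (if A t \<and> G t then 1 else 0) - q * (if A t then 1 else 0)" for t
          using S.dd_def[OF qdef] unfolding A_def G_def by (simp add: ind_def)
        then show ?thesis unfolding N_def KK_def by (simp add: sum_subtractf sum_distrib_left)
      qed
      then show "\<And>\<delta>. \<delta> > 0 \<Longrightarrow> \<exists>n0. \<forall>n\<ge>n0. \<bar>N n - q * KK n\<bar> \<le> \<delta> * real n" using hM by auto
    qed
    moreover have "KK n = K n \<omega>" for n unfolding KK_def K_def A_def ind_def by simp
    ultimately show "(\<lambda>n. K n \<omega> / real n) \<longlonglongrightarrow> c" unfolding c_def by simp
  qed
  have Km[measurable]: "(\<lambda>\<omega>. K n \<omega> / real n) \<in> borel_measurable M" for n
    unfolding K_def by measurable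
  have Kb: "\<bar>K n \<omega> / real n\<bar> \<le> 1" for n \<omega>
  proof -
    have k0: "0 \<le> K n \<omega>" unfolding K_def by (intro sum_nonneg) (simp add: ind_bound)
    have "K n \<omega> \<le> (\<Sum>t<n. 1)" unfolding K_def by (intro sum_mono) (simp add: ind_bound)
    then have k1: "K n \<omega> \<le> real n" by simp
    show ?thesis
    proof (cases "n = 0")
      case True then show ?thesis by simp
    next
      case False
      then have np: "real n > 0" by simp
      have "K n \<omega> / real n \<ge> 0" using k0 np by simp
      moreover have "K n \<omega> / real n \<le> 1" using k1 np by (simp add: divide_le_eq_1_pos)
      ultimately show ?thesis by simp
    qed
  qed
  have lim: "(\<lambda>n. integral\<^sup>L M (\<lambda>\<omega>. K n \<omega> / real n)) \<longlonglongrightarrow> integral\<^sup>L M (\<lambda>\<omega>. c)"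
  proof (rule integral_dominated_convergence[where w="\<lambda>_. 1"])
    show "(\<lambda>\<omega>. c) \<in> borel_measurable M" by simp
    show "\<And>n. (\<lambda>\<omega>. K n \<omega> / real n) \<in> borel_measurable M" by simp
    show "integrable M (\<lambda>_. 1::real)" by simp
    show "AE \<omega> in M. (\<lambda>n. K n \<omega> / real n) \<longlonglongrightarrow> c" by (rule conv)
    show "\<And>n. AE \<omega> in M. norm (K n \<omega> / real n) \<le> 1" using Kb by auto
  qed
  have int_eq: "integral\<^sup>L M (\<lambda>\<omega>. K n \<omega> / real n) = (\<Sum>t<n. measure M {\<omega> \<in> space M.
             let B = batteries PS PD thr (\<lambda>s. ES s \<omega>) (\<lambda>s. ED s \<omega>) (\<lambda>s. g s \<omega>) t
             in fst B \<ge> PS \<and> snd B \<ge> PD}) / real n" for n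
  proof -
    have "integral\<^sup>L M (\<lambda>\<omega>. K n \<omega> / real n) = integral\<^sup>L M (K n) / real n" by simp
    also have "integral\<^sup>L M (K n) = (\<Sum>t<n. integral\<^sup>L M (\<lambda>\<omega>. ind (S.Aw PS PD thr t \<omega>)))"
      unfolding K_def
      by (rule Bochner_Integration.integral_sum) (auto intro!: integrable_const_bound[where B=1] simp: ind_def)
    also have "\<dots> = (\<Sum>t<n. measure M {\<omega> \<in> space M. S.Aw PS PD thr t \<omega>})"
    proof (intro sum.cong refl)
      fix t
      have "integral\<^sup>L M (\<lambda>\<omega>. ind (S.Aw PS PD thr t \<omega>)) = integral\<^sup>L M (indicator {\<omega> \<in> space M. S.Aw PS PD thr t \<omega>})"
        by (rule Bochner_Integration.integral_cong) (auto simp: ind_def indicator_def)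
      then show "integral\<^sup>L M (\<lambda>\<omega>. ind (S.Aw PS PD thr t \<omega>)) = measure M {\<omega> \<in> space M. S.Aw PS PD thr t \<omega>}"
        by simp
    qed
    finally show ?thesis by (simp add: S.Aw_def)
  qed
  have ic: "integral\<^sup>L M (\<lambda>\<omega>. c) = c" by (simp add: prob_space)
  have L: "(\<lambda>n. (\<Sum>t<n. measure M {\<omega> \<in> space M.
             let B = batteries PS PD thr (\<lambda>s. ES s \<omega>) (\<lambda>s. ED s \<omega>) (\<lambda>s. g s \<omega>) t
             in fst B \<ge> PS \<and> snd B \<ge> PD}) / real n) \<longlonglongrightarrow> c"
    using lim unfolding int_eq ic .
  then show ?thesis unfolding c_def q_eq[symmetric] thr_def Ptx_def .
qed


end
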